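(* Let $q$ be a prime power, $t\ge1$, $F=\mathbb{F}_{q^t}$, $A\subseteq F$ with $|A|=n\le q^t$, and let $k$ satisfy $r=n-k\ge q^s$ for some integer $s<t$. Let $W=\{0,w_1,\dots,w_{q^s-1}\}$ be an $\mathbb{F}_q$-subspace of $F$ of dimension $s$, let $\alpha^*\in A$, let $\{\beta_1,\dots,\beta_t\}$ be an arbitrary $\mathbb{F}_q$-basis of $F$, and set \[ g_i(x)=\beta_i\prod_{j=1}^{q^s-1}\Big(x-\big(\alpha^*-w_j^{-1}\beta_i\big)\Big),\quad i=1,\dots,t. \] Then the check polynomials $g_1,\dots,g_t$ yield a linear repair scheme over $\mathbb{F}_q$ for the codeword symbol $f(\alpha^* )$ of the Reed-Solomon code $\mathrm{RS}(A,k)$ with repair bandwidth at most $(n-1)(t-s)\log_2 q$ bits. Moreover, when $n=|F|=q^t$ and $r=q^s$, this repair bandwidth is optimal among linear repair schemes over $\mathbb{F}_q$.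
   Context: $\mathrm{RS}(A,k)=\{(f(\alpha))_{\alpha\in A} : f\in F[x],\ \deg f<k\}$, with $f(\alpha)$ stored at node $\alpha$. Every polynomial $g\in F[x]$ of degree at most $r-1$ gives a dual codeword (a check): $\sum_{\alpha\in A}\lambda_\alpha g(\alpha)f(\alpha)=0$ for fixed nonzero multipliers $\lambda_\alpha$. Given checks $g_1,\dots,g_t$ of degree at most $r-1$ with $\mathrm{rank}_{\mathbb{F}_q}\{g_i(\alpha^* )\}_i=t$, one obtains a linear repair scheme over $\mathbb{F}_q$: applying $\mathrm{Tr}_{F/\mathbb{F}_q}$ to the check equations, the replacement node recovers $t$ independent traces of $f(\alpha^* )$ by downloading from each node $\alpha\ne\alpha^*$ exactly $b_\alpha=\mathrm{rank}_{\mathbb{F}_q}\{g_1(\alpha),\dots,g_t(\alpha)\}$ sub-symbols of $\mathbb{F}_q$; the repair bandwidth is $\sum_{\alpha\neq\alpha^*}b_\alpha$ sub-symbols, i.e. $\log_2 q$ times that many bits. In general a linear repair scheme over $\mathbb{F}_q$ is one where each node sends $\mathbb{F}_q$-linear functions of its symbol and $f(\alpha^* )$ is recovered $\mathbb{F}_q$-linearly; its bandwidth is the total amount downloaded. *)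

theory Defs
  imports "HOL-Computational_Algebra.Polynomial" "HOL-Computational_Algebra.Primes"
begin

text \<open>F is modelled by a finite field type 'a; the base field F_q is a subfield K of it.\<close>

definition is_subfield :: "'a::field set \<Rightarrow> bool" where
  "is_subfield K \<longleftrightarrow> 0 \<in> K \<and> 1 \<in> K \<and> (\<forall>x\<in>K. \<forall>y\<in>K. x + y \<in> K \<and> x - y \<in> K \<and> x * y \<in> K)
     \<and> (\<forall>x\<in>K. x \<noteq> 0 \<longrightarrow> inverse x \<in> K)"

definition k_indep :: "'a::field set \<Rightarrow> 'a set \<Rightarrow> bool" where
  "k_indep K S \<longleftrightarrow> finite S \<and> (\<forall>c. (\<forall>v\<in>S. c v \<in> K) \<and> (\<Sum>v\<in>S. c v * v) = 0 \<longrightarrow> (\<forall>v\<in>S. c v = 0))"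

definition k_span :: "'a::field set \<Rightarrow> 'a set \<Rightarrow> 'a set" where
  "k_span K S = {y. \<exists>c. (\<forall>v\<in>S. c v \<in> K) \<and> y = (\<Sum>v\<in>S. c v * v)}"

definition k_rank :: "'a::field set \<Rightarrow> 'a set \<Rightarrow> nat" where
  "k_rank K S = Max {card T | T. T \<subseteq> S \<and> k_indep K T}"

definition k_subspace :: "'a::field set \<Rightarrow> 'a set \<Rightarrow> bool" where
  "k_subspace K W \<longleftrightarrow> 0 \<in> W \<and> (\<forall>x\<in>W. \<forall>y\<in>W. x + y \<in> W) \<and> (\<forall>c\<in>K. \<forall>x\<in>W. c * x \<in> W)"

definition k_basis :: "'a::field set \<Rightarrow> 'a set \<Rightarrow> bool" where
  "k_basis K B \<longleftrightarrow> k_indep K B \<and> k_span K B = UNIV"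

definition k_linear_functional :: "'a::field set \<Rightarrow> ('a \<Rightarrow> 'a) \<Rightarrow> bool" where
  "k_linear_functional K \<mu> \<longleftrightarrow> (\<forall>x. \<mu> x \<in> K) \<and> (\<forall>x y. \<mu> (x + y) = \<mu> x + \<mu> y)
     \<and> (\<forall>c\<in>K. \<forall>x. \<mu> (c * x) = c * \<mu> x)"

text \<open>Codewords of RS(A,k) are evaluations of polynomials f with deg f < k (f = 0 included).\<close>

definition rs_msg :: "nat \<Rightarrow> 'a::field poly \<Rightarrow> bool" where
  "rs_msg k f \<longleftrightarrow> f = 0 \<or> degree f < k"

text \<open>A linear repair scheme over K for node astar of RS(A,k), where node alpha \<noteq> astar
  sends b alpha sub-symbols (elements of K), each a K-linear function of f(alpha), and
  f(astar) is recovered by a K-linear map R of the downloaded sub-symbols.\<close>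

definition download ::
  "'a set \<Rightarrow> 'a \<Rightarrow> ('a \<Rightarrow> nat) \<Rightarrow> ('a \<Rightarrow> nat \<Rightarrow> 'a \<Rightarrow> 'a) \<Rightarrow> 'a::field poly \<Rightarrow> 'a \<Rightarrow> nat \<Rightarrow> 'a" where
  "download A astar b \<mu> f \<alpha> j = (if \<alpha> \<in> A - {astar} \<and> j < b \<alpha> then \<mu> \<alpha> j (poly f \<alpha>) else 0)"

definition linear_repair_scheme ::
  "'a::field set \<Rightarrow> 'a set \<Rightarrow> nat \<Rightarrow> 'a \<Rightarrow> ('a \<Rightarrow> nat) \<Rightarrow> bool" where
  "linear_repair_scheme K A k astar b \<longleftrightarrow>
     (\<exists>\<mu> R. (\<forall>\<alpha> j. k_linear_functional K (\<mu> \<alpha> j))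
        \<and> (\<forall>x y c. (\<forall>\<alpha> j. x \<alpha> j \<in> K) \<and> (\<forall>\<alpha> j. y \<alpha> j \<in> K) \<and> c \<in> K \<longrightarrow>
              R (\<lambda>\<alpha> j. c * x \<alpha> j + y \<alpha> j) = c * R x + R y)
        \<and> (\<forall>f. rs_msg k f \<longrightarrow> R (download A astar b \<mu> f) = poly f astar))"

definition bandwidth :: "'a set \<Rightarrow> 'a \<Rightarrow> ('a \<Rightarrow> nat) \<Rightarrow> nat" where
  "bandwidth A astar b = (\<Sum>\<alpha>\<in>A - {astar}. b \<alpha>)"

definition bandwidth_bits :: "nat \<Rightarrow> 'a set \<Rightarrow> 'a \<Rightarrow> ('a \<Rightarrow> nat) \<Rightarrow> real" where
  "bandwidth_bits q A astar b = real (bandwidth A astar b) * log 2 (real q)"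

definition check_poly :: "'a set \<Rightarrow> 'a \<Rightarrow> (nat \<Rightarrow> 'a) \<Rightarrow> nat \<Rightarrow> 'a::field poly" where
  "check_poly W astar \<beta> i =
     smult (\<beta> i) (\<Prod>w\<in>W - {0}. [:- (astar - inverse w * \<beta> i), 1:])"

definition check_b :: "'a::field set \<Rightarrow> (nat \<Rightarrow> 'a poly) \<Rightarrow> nat \<Rightarrow> 'a \<Rightarrow> nat" where
  "check_b K g t \<alpha> = k_rank K ((\<lambda>i. poly (g i) \<alpha>) ` {1..t})"

end

theory Submission imports Defs "HOL-Library.FuncSet" begin


definition tr :: "nat \<Rightarrow> nat \<Rightarrow> 'a::field \<Rightarrow> 'a" where
  "tr q t x = (\<Sum>j<t. x ^ (q ^ j))"

definition k_lin :: "'a::field set \<Rightarrow> ('a \<Rightarrow> 'a) \<Rightarrow> bool" where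
  "k_lin K L \<longleftrightarrow> (\<forall>x y. L (x + y) = L x + L y) \<and> (\<forall>c\<in>K. \<forall>x. L (c * x) = c * L x)"

lemma pow_card_self:
  fixes H :: "'a::field set"
  assumes fin: "finite H" and cH: "c \<in> H" and mul: "\<And>x y. x \<in> H \<Longrightarrow> y \<in> H \<Longrightarrow> x * y \<in> H"
    and inv: "\<And>x. x \<in> H \<Longrightarrow> x \<noteq> 0 \<Longrightarrow> inverse x \<in> H" and z: "0 \<in> H"
  shows "c ^ card H = c"
proof (cases "c = 0")
  case True
  have "card H > 0" using fin z card_gt_0_iff by blast
  then show ?thesis using True by simp
next
  case False
  let ?H = "H - {0}"
  have fin': "finite ?H" using fin by simp
  have "(\<Prod>y\<in>?H. c * y) = (\<Prod>y\<in>?H. y)"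
    by (rule prod.reindex_bij_witness[of _ "\<lambda>y. y / c" "\<lambda>y. c * y"])
       (use False cH mul inv in \<open>auto simp: divide_inverse\<close>)
  moreover have "(\<Prod>y\<in>?H. c * y) = c ^ card ?H * (\<Prod>y\<in>?H. y)"
    by (simp add: prod.distrib)
  moreover have "(\<Prod>y\<in>?H. y) \<noteq> 0" using fin' by simp
  ultimately have "c ^ card ?H = 1" by simp
  moreover have "card H = Suc (card ?H)" using fin z card_Suc_Diff1 by metis
  ultimately show ?thesis by simp
qed

locale fsetup =
  fixes K :: "'a::{field,finite} set" and q t :: nat
  assumes K_sub: "is_subfield K" and K_card: "card K = q"
    and F_card: "card (UNIV::'a set) = q ^ t"
    and t_pos: "t \<ge> 1" and q_pp: "\<exists>p m. prime p \<and> m > 0 \<and> q = p ^ m"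
begin

lemma K0[simp]: "0 \<in> K" and K1[simp]: "1 \<in> K"
  using K_sub unfolding is_subfield_def by auto

lemma Kadd[simp]: "x \<in> K \<Longrightarrow> y \<in> K \<Longrightarrow> x + y \<in> K"
  and Kdiff[simp]: "x \<in> K \<Longrightarrow> y \<in> K \<Longrightarrow> x - y \<in> K"
  and Kmult[simp]: "x \<in> K \<Longrightarrow> y \<in> K \<Longrightarrow> x * y \<in> K"
  using K_sub unfolding is_subfield_def by auto

lemma Kinv: "x \<in> K \<Longrightarrow> inverse x \<in> K"
  using K_sub unfolding is_subfield_def by (cases "x = 0") auto

lemma Kuminus: "x \<in> K \<Longrightarrow> - x \<in> K"
  using Kdiff[of 0 x] by simp

lemma Kdiv: "x \<in> K \<Longrightarrow> y \<in> K \<Longrightarrow> x / y \<in> K"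
  by (simp add: divide_inverse Kinv)

lemma Ksum: "(\<And>i. i \<in> I \<Longrightarrow> f i \<in> K) \<Longrightarrow> sum f I \<in> K"
  by (induction I rule: infinite_finite_induct) auto

lemma Kpow: "x \<in> K \<Longrightarrow> x ^ n \<in> K"
  by (induction n) auto

lemma q_ge2: "q \<ge> 2"
proof -
  have "{0, 1} \<subseteq> K" by simp
  then have "card {0::'a, 1} \<le> card K" by (intro card_mono) auto
  then show ?thesis using K_card by simp
qed

lemma q_pos: "q > 0" using q_ge2 by simp

lemma Kpow_q: "c \<in> K \<Longrightarrow> c ^ q = c"
  using pow_card_self[of K c] K_card Kinv by auto

lemma Kpow_qj: "c \<in> K \<Longrightarrow> c ^ (q ^ j) = c"
proof (induction j)
  case (Suc j)
  have "c ^ (q ^ Suc j) = (c ^ (q ^ j)) ^ q" by (metis power_Suc2 power_mult)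
  then show ?case using Suc Kpow_q by simp
qed simp

lemma Fpow: "(x::'a) ^ (q ^ t) = x"
  using pow_card_self[of UNIV x] F_card by auto

lemma CHAR_dvd_card: "CHAR('a) dvd card (UNIV::'a set)"
proof -
  have "(\<Sum>y\<in>UNIV. 1 + (y::'a)) = (\<Sum>y\<in>UNIV. y)"
    by (rule sum.reindex_bij_witness[of _ "\<lambda>y. y - 1" "\<lambda>y. 1 + y"]) auto
  then have "of_nat (card (UNIV::'a set)) = (0::'a)" by (simp add: sum.distrib)
  then show ?thesis using of_nat_eq_0_iff_char_dvd by blast
qed

lemma CHAR_prime: "prime CHAR('a)"
  by (intro prime_CHAR_semidom finite_imp_CHAR_pos) simp

lemma q_char: "\<exists>m. q = CHAR('a) ^ m"
proof -
  obtain p m where p: "prime p" "m > 0" "q = p ^ m" using q_pp by blast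
  have "CHAR('a) dvd p ^ (m * t)" using CHAR_dvd_card F_card p
    by (simp add: power_mult)
  then have "CHAR('a) dvd p" using CHAR_prime prime_dvd_power by blast
  then have "CHAR('a) = p" using CHAR_prime p primes_dvd_imp_eq by blast
  then show ?thesis using p by blast
qed

lemma frob_add: "((x::'a) + y) ^ (q ^ j) = x ^ (q ^ j) + y ^ (q ^ j)"
proof -
  obtain m where m: "q = CHAR('a) ^ m" using q_char by blast
  show ?thesis
    by (rule freshmans_dream'[OF CHAR_prime, of _ "m * j"]) (simp add: m power_mult)
qed

lemma frob_sum: "(sum (f::_\<Rightarrow>'a) I) ^ (q ^ j) = (\<Sum>i\<in>I. f i ^ (q ^ j))"
proof -
  obtain m where m: "q = CHAR('a) ^ m" using q_char by blast
  show ?thesis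
    by (rule freshmans_dream_sum'[OF CHAR_prime, of _ "m * j"]) (simp add: m power_mult)
qed

lemma K_roots: "(y::'a) ^ q = y \<Longrightarrow> y \<in> K"
proof -
  assume y: "y ^ q = y"
  define P :: "'a poly" where "P = monom 1 q + [:0, -1:]"
  have dP: "degree P = q" using q_ge2 unfolding P_def
    by (subst degree_add_eq_left) (auto simp: degree_monom_eq)
  then have "P \<noteq> 0" using q_ge2 by auto
  then have c: "card {x. poly P x = 0} \<le> q" using card_poly_roots_bound dP by metis
  have eq: "{x. poly P x = 0} = {x. x ^ q = x}" by (auto simp: P_def poly_monom)
  have "K \<subseteq> {x. x ^ q = x}" using Kpow_q by auto
  moreover have "card {x::'a. x ^ q = x} \<le> card K" using c eq K_card by simp
  ultimately have "K = {x. x ^ q = x}"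
    by (metis antisym card_mono card_subset_eq finite)
  then show ?thesis using y by auto
qed

end


context fsetup begin

lemma tr_add: "tr q t ((x::'a) + y) = tr q t x + tr q t y"
  unfolding tr_def by (simp add: frob_add sum.distrib)

lemma tr_smult: "c \<in> K \<Longrightarrow> tr q t (c * (x::'a)) = c * tr q t x"
  unfolding tr_def by (simp add: power_mult_distrib Kpow_qj sum_distrib_left)

lemma tr_0[simp]: "tr q t (0::'a) = 0"
  unfolding tr_def by (intro sum.neutral) (simp add: q_pos)

lemma tr_diff: "tr q t ((x::'a) - y) = tr q t x - tr q t y"
  using tr_add[of "x - y" y] by simp

lemma tr_sum: "tr q t (sum (f::_\<Rightarrow>'a) I) = (\<Sum>i\<in>I. tr q t (f i))"
  by (induction I rule: infinite_finite_induct) (auto simp: tr_add)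

lemma tr_K[simp]: "tr q t (x::'a) \<in> K"
proof -
  obtain t' where t': "t = Suc t'" using t_pos by (cases t) auto
  have "(tr q t x) ^ q = (\<Sum>j<t. (x ^ (q ^ j)) ^ q)"
    unfolding tr_def using frob_sum[of "\<lambda>j. x ^ (q ^ j)" "{..<t}" 1] by simp
  also have "\<dots> = (\<Sum>j<t. x ^ (q ^ Suc j))"
    by (intro sum.cong refl) (metis power_Suc2 power_mult)
  also have "\<dots> = (\<Sum>j<t'. x ^ (q ^ Suc j)) + x ^ (q ^ t)"
    by (simp add: t')
  also have "\<dots> = (\<Sum>j<t'. x ^ (q ^ Suc j)) + x" using Fpow by simp
  also have "\<dots> = tr q t x" unfolding tr_def t' sum.lessThan_Suc_shift by simp
  finally show ?thesis using K_roots by blast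
qed

lemma tr_Klin: "(\<And>i. i \<in> I \<Longrightarrow> c i \<in> K) \<Longrightarrow> tr q t (\<Sum>i\<in>I. c i * (f i::'a)) = (\<Sum>i\<in>I. c i * tr q t (f i))"
  by (simp add: tr_sum tr_smult)

lemma tr_nonzero: "\<exists>y::'a. tr q t y \<noteq> 0"
proof (rule ccontr)
  assume H: "\<not> (\<exists>y::'a. tr q t y \<noteq> 0)"
  define T :: "'a poly" where "T = (\<Sum>j<t. Polynomial.monom 1 (q ^ j))"
  have pT: "poly T x = tr q t x" for x unfolding T_def tr_def by (simp add: poly_sum poly_monom)
  have q1: "q > 1" using q_ge2 by simp
  have "coeff T (q ^ (t - 1)) = (\<Sum>j<t. if j = t - 1 then 1 else 0)"
    unfolding T_def coeff_sum coeff_monom using q1 by (intro sum.cong) auto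
  also have "\<dots> = 1" using t_pos by simp
  finally have cT: "coeff T (q ^ (t - 1)) \<noteq> 0" by simp
  then have T0: "T \<noteq> 0" by auto
  have dT: "degree T \<le> q ^ (t - 1)" unfolding T_def
    by (intro degree_sum_le) (auto intro!: order.trans[OF degree_monom_le] power_increasing simp: q_pos Suc_leI)
  have "card {x. poly T x = 0} \<le> degree T" by (rule card_poly_roots_bound[OF T0])
  moreover have "{x. poly T x = 0} = UNIV" using H pT by auto
  ultimately have "q ^ t \<le> q ^ (t - 1)" using F_card dT by simp
  then have "t \<le> t - 1" using q1 power_le_imp_le_exp by blast
  then show False using t_pos by simp
qed

lemma tr_nondeg: "(\<And>y::'a. tr q t (y * z) = 0) \<Longrightarrow> z = (0::'a)"
proof (rule ccontr)
  assume H: "\<And>y. tr q t (y * z) = 0" and z: "z \<noteq> 0"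
  obtain y :: 'a where "tr q t y \<noteq> 0" using tr_nonzero by blast
  moreover have "tr q t ((y / z) * z) = 0" by (rule H)
  ultimately show False using z by simp
qed

lemma span_subspace: "k_subspace K (k_span K S)"
  unfolding k_subspace_def k_span_def
proof (intro conjI ballI)
  show "0 \<in> {y. \<exists>c. (\<forall>v\<in>S. c v \<in> K) \<and> y = (\<Sum>v\<in>S. c v * v)}"
    by (intro CollectI exI[of _ "\<lambda>_. 0"]) auto
next
  fix x y assume "x \<in> {y. \<exists>c. (\<forall>v\<in>S. c v \<in> K) \<and> y = (\<Sum>v\<in>S. c v * v)}"
    "y \<in> {y. \<exists>c. (\<forall>v\<in>S. c v \<in> K) \<and> y = (\<Sum>v\<in>S. c v * v)}"
  then obtain c d where "\<forall>v\<in>S. c v \<in> K" "x = (\<Sum>v\<in>S. c v * v)" "\<forall>v\<in>S. d v \<in> K" "y = (\<Sum>v\<in>S. d v * v)"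
    by blast
  then show "x + y \<in> {y. \<exists>c. (\<forall>v\<in>S. c v \<in> K) \<and> y = (\<Sum>v\<in>S. c v * v)}"
    by (intro CollectI exI[of _ "\<lambda>v. c v + d v"]) (auto simp: sum.distrib distrib_right)
next
  fix a x assume a: "a \<in> K" and "x \<in> {y. \<exists>c. (\<forall>v\<in>S. c v \<in> K) \<and> y = (\<Sum>v\<in>S. c v * v)}"
  then obtain c where "\<forall>v\<in>S. c v \<in> K" "x = (\<Sum>v\<in>S. c v * v)" by blast
  then show "a * x \<in> {y. \<exists>c. (\<forall>v\<in>S. c v \<in> K) \<and> y = (\<Sum>v\<in>S. c v * v)}"
    using a by (intro CollectI exI[of _ "\<lambda>v. a * c v"]) (auto simp: sum_distrib_left mult.assoc)
qed

lemma subspace_sum: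
  assumes V: "k_subspace K V"
  shows "(\<And>b. b \<in> B \<Longrightarrow> f b \<in> V) \<Longrightarrow> (\<And>b. b \<in> B \<Longrightarrow> c b \<in> K) \<Longrightarrow> (\<Sum>b\<in>B. c b * f b) \<in> V"
proof (induction B rule: infinite_finite_induct)
  case (infinite A) then show ?case using V by (simp add: k_subspace_def)
next
  case empty then show ?case using V by (simp add: k_subspace_def)
next
  case (insert x F)
  then show ?case using V unfolding k_subspace_def by simp
qed

lemma span_superset: "finite S \<Longrightarrow> S \<subseteq> k_span K S"
proof
  fix v assume fin: "finite S" and v: "v \<in> S"
  have "(\<Sum>w\<in>S. (if w = v then 1 else 0) * w) = (\<Sum>w\<in>S. if w = v then w else 0)"
    by (rule sum.cong) auto
  also have "\<dots> = v" using fin v by (simp add: sum.delta')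
  finally show "v \<in> k_span K S" unfolding k_span_def
    by (intro CollectI exI[of _ "\<lambda>w. if w = v then 1 else 0"]) auto
qed

lemma span_least: "finite S \<Longrightarrow> k_subspace K V \<Longrightarrow> S \<subseteq> V \<Longrightarrow> k_span K S \<subseteq> V"
proof
  fix y assume "finite S" "k_subspace K V" "S \<subseteq> V" "y \<in> k_span K S"
  then obtain c where "\<forall>v\<in>S. c v \<in> K" "y = (\<Sum>v\<in>S. c v * v)" unfolding k_span_def by blast
  then show "y \<in> V" using subspace_sum[OF \<open>k_subspace K V\<close>, of S id c] \<open>S \<subseteq> V\<close> by auto
qed

lemma subspace_span_eq:
  assumes "k_subspace K W" shows "k_span K W = W"
proof
  have fW: "finite W" by simp
  show "k_span K W \<subseteq> W" by (rule span_least[OF fW assms subset_refl])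
  show "W \<subseteq> k_span K W" by (rule span_superset[OF fW])
qed

lemma max_indep:
  assumes fin: "finite S"
  shows "\<exists>T\<subseteq>S. k_indep K T \<and> card T = k_rank K S \<and> k_span K T = k_span K S"
proof -
  define C where "C = {card T | T. T \<subseteq> S \<and> k_indep K T}"
  have Cfin: "finite C" unfolding C_def by simp
  have "card {} \<in> C" unfolding C_def k_indep_def by auto
  then have Cne: "C \<noteq> {}" by auto
  have "Max C \<in> C" using Cfin Cne by simp
  then obtain T where T: "T \<subseteq> S" "k_indep K T" "card T = Max C" unfolding C_def by auto
  have rk: "k_rank K S = Max C" unfolding k_rank_def C_def by simp
  have finT: "finite T" using T fin finite_subset by blast
  have "S \<subseteq> k_span K T"
  proof
    fix v assume vS: "v \<in> S"
    show "v \<in> k_span K T"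
    proof (cases "v \<in> T")
      case True then show ?thesis using span_superset[OF finT] by auto
    next
      case False
      have "\<not> k_indep K (insert v T)"
      proof
        assume "k_indep K (insert v T)"
        then have "card (insert v T) \<in> C" unfolding C_def using vS T by blast
        then have "card (insert v T) \<le> Max C" using Cfin by simp
        then show False using False finT T by simp
      qed
      then obtain c where c: "\<forall>w\<in>insert v T. c w \<in> K" "(\<Sum>w\<in>insert v T. c w * w) = 0"
        "\<exists>w\<in>insert v T. c w \<noteq> 0"
        unfolding k_indep_def using finT by blast
      have sum_eq: "c v * v + (\<Sum>w\<in>T. c w * w) = 0" using c(2) False finT by simp
      have cv: "c v \<noteq> 0"
      proof
        assume "c v = 0"
        then have "(\<Sum>w\<in>T. c w * w) = 0" using sum_eq by simp
        then have "\<forall>w\<in>T. c w = 0" using T(2) c(1) unfolding k_indep_def by auto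
        then show False using c(3) \<open>c v = 0\<close> by auto
      qed
      have "v = (\<Sum>w\<in>T. (- c w / c v) * w)"
      proof -
        have "(\<Sum>w\<in>T. (- c w / c v) * w) = - (\<Sum>w\<in>T. c w * w) / c v"
          by (simp add: sum_divide_distrib sum_negf)
        also have "\<dots> = v"
        proof -
          have "c v * v = - (\<Sum>w\<in>T. c w * w)" using sum_eq by (simp only: eq_neg_iff_add_eq_0)
          then have "- (\<Sum>w\<in>T. c w * w) = c v * v" by simp
          then show ?thesis using cv by simp
        qed
        finally show ?thesis by simp
      qed
      then show ?thesis unfolding k_span_def using c(1)
        by (intro CollectI exI[of _ "\<lambda>w. - c w / c v"]) (auto simp: Kuminus Kdiv)
    qed
  qed
  then have "k_span K S \<subseteq> k_span K T" using span_least[OF fin span_subspace] by blast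
  moreover have "k_span K T \<subseteq> k_span K S"
    using span_least[OF finT span_subspace] span_superset[OF fin] T(1) by blast
  ultimately have eq: "k_span K T = k_span K S" by (rule equalityI[rotated])
  have "card T = k_rank K S" using T(3) rk by simp
  then show ?thesis using T(1,2) eq by blast
qed

lemma card_span_indep:
  assumes ind: "k_indep K T"
  shows "card (k_span K T) = q ^ card T"
proof -
  have finT: "finite T" using ind unfolding k_indep_def by simp
  define \<phi> where "\<phi> c = (\<Sum>v\<in>T. c v * v)" for c
  have "bij_betw \<phi> (PiE T (\<lambda>_. K)) (k_span K T)"
    unfolding bij_betw_def
  proof
    show "inj_on \<phi> (PiE T (\<lambda>_. K))"
    proof (rule inj_onI)
      fix c d assume c: "c \<in> PiE T (\<lambda>_. K)" and d: "d \<in> PiE T (\<lambda>_. K)" and e: "\<phi> c = \<phi> d"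
      have "(\<Sum>v\<in>T. (c v - d v) * v) = 0" using e unfolding \<phi>_def
        by (simp add: left_diff_distrib sum_subtractf)
      moreover have "\<forall>v\<in>T. c v - d v \<in> K" using c d by (auto simp: PiE_iff)
      ultimately have "\<forall>v\<in>T. c v - d v = 0"
        using ind[unfolded k_indep_def, THEN conjunct2, THEN spec, of "\<lambda>v. c v - d v"] by simp
      then show "c = d" using c d by (intro PiE_ext) auto
    qed
    show "\<phi> ` PiE T (\<lambda>_. K) = k_span K T"
    proof
      show "\<phi> ` PiE T (\<lambda>_. K) \<subseteq> k_span K T" unfolding \<phi>_def k_span_def by (auto simp: PiE_iff)
      show "k_span K T \<subseteq> \<phi> ` PiE T (\<lambda>_. K)"
      proof
        fix y assume "y \<in> k_span K T"
        then obtain c where c: "\<forall>v\<in>T. c v \<in> K" "y = (\<Sum>v\<in>T. c v * v)" unfolding k_span_def by blast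
        have "\<phi> (restrict c T) = y" unfolding \<phi>_def c(2) by (intro sum.cong) auto
        moreover have "restrict c T \<in> PiE T (\<lambda>_. K)" using c(1) by auto
        ultimately show "y \<in> \<phi> ` PiE T (\<lambda>_. K)" by blast
      qed
    qed
  qed
  then have "card (k_span K T) = card (PiE T (\<lambda>_. K))" by (metis bij_betw_same_card)
  also have "\<dots> = q ^ card T" using finT by (simp add: card_PiE K_card)
  finally show ?thesis .
qed

lemma card_span: "finite S \<Longrightarrow> card (k_span K S) = q ^ k_rank K S"
  using max_indep[of S] card_span_indep by metis

lemma klin_0: "k_lin K L \<Longrightarrow> L 0 = 0"
  unfolding k_lin_def by (metis add_cancel_right_right add_0)

lemma klin_sum: "k_lin K L \<Longrightarrow> (\<And>i. i \<in> I \<Longrightarrow> c i \<in> K) \<Longrightarrow> L (\<Sum>i\<in>I. c i * f i) = (\<Sum>i\<in>I. c i * L (f i))"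
proof (induction I rule: infinite_finite_induct)
  case (infinite A) then show ?case using klin_0 by simp
next
  case empty then show ?case using klin_0 by simp
next
  case (insert x F) then show ?case unfolding k_lin_def by simp
qed

lemma range_subspace: "k_lin K L \<Longrightarrow> k_subspace K (range L)"
  unfolding k_subspace_def
proof (intro conjI ballI)
  assume L: "k_lin K L"
  show "0 \<in> range L" using klin_0[OF L] by (metis rangeI)
  fix x y assume "x \<in> range L" "y \<in> range L"
  then obtain a b where "x = L a" "y = L b" by auto
  then have "x + y = L (a + b)" using L unfolding k_lin_def by simp
  then show "x + y \<in> range L" by simp
next
  fix c x assume L: "k_lin K L" and c: "c \<in> K" and "x \<in> range L"
  then obtain a where "x = L a" by auto
  then have "c * x = L (c * a)" using L c unfolding k_lin_def by simp
  then show "c * x \<in> range L" by simp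
qed

lemma span_image:
  assumes L: "k_lin K L" and fin: "finite B" and sp: "k_span K B = UNIV"
  shows "k_span K (L ` B) = range L"
proof
  show "k_span K (L ` B) \<subseteq> range L" using span_least[OF finite_imageI[OF fin] range_subspace[OF L]] by auto
  show "range L \<subseteq> k_span K (L ` B)"
  proof
    fix y assume "y \<in> range L"
    then obtain x where x: "y = L x" by auto
    have "x \<in> k_span K B" using sp by simp
    then obtain c where c: "\<forall>v\<in>B. c v \<in> K" "x = (\<Sum>v\<in>B. c v * v)" unfolding k_span_def by blast
    have "y = (\<Sum>v\<in>B. c v * L v)" using x c klin_sum[OF L, of B c id] by simp
    also have "\<dots> \<in> k_span K (L ` B)"
      using subspace_sum[OF span_subspace, where B=B and f=L and c=c] span_superset[of "L ` B"] fin c by auto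
    finally show "y \<in> k_span K (L ` B)" .
  qed
qed

lemma card_range_ker:
  assumes L: "k_lin K L" and U: "\<And>u. u \<in> U \<Longrightarrow> L u = 0"
  shows "card (range L) * card U \<le> card (UNIV::'a set)"
proof -
  define s where "s y = (SOME x. L x = y)" for y
  have s: "y \<in> range L \<Longrightarrow> L (s y) = y" for y unfolding s_def by (rule someI_ex) auto
  have key: "y1 = y2" if h: "y1 \<in> range L" "u1 \<in> U" "y2 \<in> range L" "u2 \<in> U" "s y1 + u1 = s y2 + u2"
    for y1 u1 y2 u2
  proof -
    have "L (s y1 + u1) = L (s y1) + L u1" "L (s y2 + u2) = L (s y2) + L u2"
      using L unfolding k_lin_def by blast+
    then have "L (s y1 + u1) = y1" "L (s y2 + u2) = y2" using s[OF h(1)] s[OF h(3)] U[OF h(2)] U[OF h(4)] by simp_all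
    then show "y1 = y2" using h by metis
  qed
  have "inj_on (\<lambda>(y, u). s y + u) (range L \<times> U)"
  proof (rule inj_onI)
    fix p1 p2 assume p: "p1 \<in> range L \<times> U" "p2 \<in> range L \<times> U"
      "(\<lambda>(y, u). s y + u) p1 = (\<lambda>(y, u). s y + u) p2"
    obtain y1 u1 y2 u2 where pp: "p1 = (y1, u1)" "p2 = (y2, u2)" by (cases p1, cases p2) auto
    have h: "y1 \<in> range L" "u1 \<in> U" "y2 \<in> range L" "u2 \<in> U" "s y1 + u1 = s y2 + u2"
      using p pp by auto
    then have "y1 = y2" by (rule key)
    then show "p1 = p2" using h pp by simp
  qed
  then have "card (range L \<times> U) \<le> card (UNIV::'a set)" by (intro card_inj_on_le) auto
  then show ?thesis by (simp add: card_cartesian_product)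
qed

lemma ker_count:
  fixes I :: "'b set" and J :: "'c set" and a :: "'b \<Rightarrow> 'c \<Rightarrow> 'a"
  assumes finI: "finite I" and finJ: "finite J" and a: "\<And>i j. a i j \<in> K"
  shows "q ^ card I \<le> q ^ card J * card {x \<in> PiE I (\<lambda>_. K). \<forall>j\<in>J. (\<Sum>i\<in>I. x i * a i j) = 0}"
proof -
  define X where "X = PiE I (\<lambda>_. K)"
  define ker where "ker = {x \<in> PiE I (\<lambda>_. K). \<forall>j\<in>J. (\<Sum>i\<in>I. x i * a i j) = 0}"
  define Lm where "Lm (x::'b\<Rightarrow>'a) = restrict (\<lambda>j. \<Sum>i\<in>I. x i * a i j) J" for x
  define s where "s y = (SOME x. x \<in> X \<and> Lm x = y)" for y
  have s: "s (Lm x) \<in> X \<and> Lm (s (Lm x)) = Lm x" if "x \<in> X" for x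
  proof -
    have "\<exists>z. z \<in> X \<and> Lm z = Lm x" using that by blast
    from someI_ex[OF this] show ?thesis unfolding s_def .
  qed
  define h where "h (x::'b\<Rightarrow>'a) = (Lm x, restrict (\<lambda>i. x i - s (Lm x) i) I)" for x
  have LmY: "Lm ` X \<subseteq> PiE J (\<lambda>_. K)"
  proof
    fix y assume "y \<in> Lm ` X"
    then obtain x where "x \<in> X" "y = Lm x" by auto
    then show "y \<in> PiE J (\<lambda>_. K)" unfolding Lm_def X_def PiE_iff using a by (auto intro!: Ksum)
  qed
  have hX: "h ` X \<subseteq> Lm ` X \<times> ker"
  proof
    fix z assume "z \<in> h ` X"
    then obtain x where x: "x \<in> X" "z = h x" by auto
    have sx: "s (Lm x) \<in> X" "Lm (s (Lm x)) = Lm x" using s[OF x(1)] by auto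
    have "(\<Sum>i\<in>I. x i * a i j) = (\<Sum>i\<in>I. s (Lm x) i * a i j)" if "j \<in> J" for j
      using fun_cong[OF sx(2), of j] that unfolding Lm_def by simp
    then have sj: "(\<Sum>i\<in>I. (x i - s (Lm x) i) * a i j) = 0" if "j \<in> J" for j
      using that by (simp add: left_diff_distrib sum_subtractf)
    have r: "(\<Sum>i\<in>I. restrict (\<lambda>i. x i - s (Lm x) i) I i * a i j) = (\<Sum>i\<in>I. (x i - s (Lm x) i) * a i j)" for j
      by (rule sum.cong) auto
    have "restrict (\<lambda>i. x i - s (Lm x) i) I \<in> PiE I (\<lambda>_. K)"
      using x(1) sx(1) unfolding X_def PiE_iff by auto
    then have "restrict (\<lambda>i. x i - s (Lm x) i) I \<in> ker"
      unfolding ker_def using sj r by simp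
    then show "z \<in> Lm ` X \<times> ker" using x unfolding h_def by auto
  qed
  have inj: "inj_on h X"
  proof (rule inj_onI)
    fix x y assume x: "x \<in> X" and y: "y \<in> X" and e: "h x = h y"
    have l: "Lm x = Lm y" using e unfolding h_def by (rule Pair_inject)
    have "\<forall>i\<in>I. x i - s (Lm x) i = y i - s (Lm x) i"
    proof
      fix i assume i: "i \<in> I"
      have "restrict (\<lambda>i. x i - s (Lm x) i) I = restrict (\<lambda>i. y i - s (Lm y) i) I"
        using e unfolding h_def by (rule Pair_inject)
      then have "restrict (\<lambda>i. x i - s (Lm x) i) I = restrict (\<lambda>i. y i - s (Lm x) i) I"
        by (simp only: l)
      from fun_cong[OF this, of i] show "x i - s (Lm x) i = y i - s (Lm x) i" using i by simp
    qed
    then show "x = y" using x y unfolding X_def by (intro PiE_ext) auto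
  qed
  have finX: "finite X" unfolding X_def using finI by (intro finite_PiE) auto
  have finker: "finite ker" using finX unfolding ker_def X_def by (rule finite_subset[rotated]) auto
  have "q ^ card I = card (h ` X)" using card_image[OF inj] finI unfolding X_def by (simp add: card_PiE K_card)
  also have "\<dots> \<le> card (Lm ` X \<times> ker)" by (intro card_mono hX) (auto simp: finX finker)
  also have "\<dots> = card (Lm ` X) * card ker" by (simp add: card_cartesian_product)
  also have "\<dots> \<le> q ^ card J * card ker"
  proof -
    have "card (Lm ` X) \<le> card (PiE J (\<lambda>_. K))"
      by (intro card_mono LmY) (simp add: finJ finite_PiE)
    also have "\<dots> = q ^ card J" using finJ by (simp add: card_PiE K_card)
    finally show ?thesis by simp
  qed
  finally show ?thesis unfolding ker_def .
qed

end


lemma linprod_deg: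
  fixes a :: "'b \<Rightarrow> 'a::field"
  shows "degree (\<Prod>u\<in>S. [:a u, 1:]) = card S"
proof (cases "finite S")
  case True
  have "degree (\<Prod>u\<in>S. [:a u, 1:]) = (\<Sum>u\<in>S. degree [:a u, 1:])"
    by (rule degree_prod_eq_sum_degree) auto
  then show ?thesis by simp
qed simp

lemma linprod_lead:
  fixes a :: "'b \<Rightarrow> 'a::field"
  shows "coeff (\<Prod>u\<in>S. [:a u, 1:]) (card S) = 1"
proof -
  have "coeff (\<Prod>u\<in>S. [:a u, 1:]) (card S) = lead_coeff (\<Prod>u\<in>S. [:a u, 1:])"
    by (simp add: linprod_deg)
  also have "\<dots> = 1" by (simp add: lead_coeff_prod)
  finally show ?thesis .
qed

lemma zero_poly_many_roots:
  fixes D :: "'a::field poly"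
  assumes "finite R" "\<And>x. x \<in> R \<Longrightarrow> poly D x = 0" "degree D < card R"
  shows "D = 0"
proof (rule ccontr)
  assume D: "D \<noteq> 0"
  have "finite {x. poly D x = 0}" using poly_roots_finite[OF D] .
  then have "card R \<le> card {x. poly D x = 0}" using assms by (intro card_mono) auto
  also have "\<dots> \<le> degree D" by (rule card_poly_roots_bound[OF D])
  finally show False using assms by simp
qed

lemma lagrange_sum:
  fixes A :: "'a::field set" and h :: "'a poly"
  assumes fin: "finite A" and dh: "h = 0 \<or> degree h + 2 \<le> card A"
  shows "(\<Sum>\<alpha>\<in>A. poly h \<alpha> * inverse (\<Prod>\<beta>\<in>A - {\<alpha>}. (\<alpha> - \<beta>))) = 0"
proof (cases "h = 0")
  case True then show ?thesis by simp
next
  case False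
  define n where "n = card A"
  have dh': "degree h + 2 \<le> n" using dh False n_def by simp
  define lam where "lam \<alpha> = inverse (\<Prod>\<beta>\<in>A - {\<alpha>}. (\<alpha> - \<beta>))" for \<alpha>
  define P where "P \<alpha> = (\<Prod>\<beta>\<in>A - {\<alpha>}. [:- \<beta>, 1:])" for \<alpha>
  define I where "I = (\<Sum>\<alpha>\<in>A. smult (poly h \<alpha> * lam \<alpha>) (P \<alpha>))"
  have cardA: "card (A - {\<alpha>}) = n - 1" if "\<alpha> \<in> A" for \<alpha> using fin that n_def by simp
  have degP: "degree (P \<alpha>) = n - 1" if "\<alpha> \<in> A" for \<alpha>
    unfolding P_def using linprod_deg[of "\<lambda>\<beta>. - \<beta>" "A - {\<alpha>}"] cardA[OF that] by simp
  have cP: "coeff (P \<alpha>) (n - 1) = 1" if "\<alpha> \<in> A" for \<alpha>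
    unfolding P_def using linprod_lead[of "\<lambda>\<beta>. - \<beta>" "A - {\<alpha>}"] cardA[OF that] by simp
  have pP: "poly (P \<alpha>) \<gamma> = (\<Prod>\<beta>\<in>A - {\<alpha>}. (\<gamma> - \<beta>))" for \<alpha> \<gamma>
    unfolding P_def by (simp add: poly_prod)
  have pP0: "poly (P \<alpha>) \<gamma> = 0" if "\<gamma> \<in> A" "\<gamma> \<noteq> \<alpha>" for \<alpha> \<gamma>
    unfolding pP using fin that by (intro prod_zero) auto
  have pP1: "lam \<alpha> * poly (P \<alpha>) \<alpha> = 1" if "\<alpha> \<in> A" for \<alpha>
  proof -
    have "(\<Prod>\<beta>\<in>A - {\<alpha>}. (\<alpha> - \<beta>)) \<noteq> 0" using fin by (simp add: prod_zero_iff)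
    then show ?thesis unfolding lam_def pP by simp
  qed
  have pI: "poly I \<gamma> = poly h \<gamma>" if "\<gamma> \<in> A" for \<gamma>
  proof -
    have "poly I \<gamma> = (\<Sum>\<alpha>\<in>A. poly h \<alpha> * lam \<alpha> * poly (P \<alpha>) \<gamma>)"
      unfolding I_def by (simp add: poly_sum)
    also have "\<dots> = poly h \<gamma> * lam \<gamma> * poly (P \<gamma>) \<gamma> + (\<Sum>\<alpha>\<in>A - {\<gamma>}. poly h \<alpha> * lam \<alpha> * poly (P \<alpha>) \<gamma>)"
      using fin that by (simp add: sum.remove)
    also have "(\<Sum>\<alpha>\<in>A - {\<gamma>}. poly h \<alpha> * lam \<alpha> * poly (P \<alpha>) \<gamma>) = 0"
      using pP0 that by (intro sum.neutral) auto
    also have "poly h \<gamma> * lam \<gamma> * poly (P \<gamma>) \<gamma> = poly h \<gamma>"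
      using pP1[OF that] by (simp add: mult.assoc)
    finally show ?thesis by simp
  qed
  have degI: "degree I \<le> n - 1" unfolding I_def
    by (intro degree_sum_le fin) (use degP in \<open>auto intro: order.trans[OF degree_smult_le]\<close>)
  have "h - I = 0"
  proof (rule zero_poly_many_roots[OF fin])
    show "poly (h - I) x = 0" if "x \<in> A" for x using pI[OF that] by simp
    have "degree (h - I) \<le> n - 1" using degI dh' by (intro degree_diff_le) auto
    then show "degree (h - I) < card A" using dh' n_def by simp
  qed
  then have hI: "h = I" by simp
  have "coeff h (n - 1) = 0" using dh' by (intro coeff_eq_0) simp
  then have "coeff I (n - 1) = 0" using hI by simp
  moreover have "coeff I (n - 1) = (\<Sum>\<alpha>\<in>A. poly h \<alpha> * lam \<alpha>)"
    unfolding I_def coeff_sum using cP by (intro sum.cong) auto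
  ultimately show ?thesis unfolding lam_def by simp
qed

context fsetup begin

lemma klin_diff: "k_lin K L \<Longrightarrow> L (x - y) = L x - L y"
  unfolding k_lin_def by (metis add_diff_cancel diff_add_cancel)

lemma klin_scale: "k_lin K L \<Longrightarrow> k_lin K (\<lambda>x. C * L x)"
  unfolding k_lin_def by (simp add: distrib_left mult.left_commute)

lemma frob_lin: "k_lin K (\<lambda>x::'a. x ^ (q ^ s))"
  unfolding k_lin_def by (simp add: frob_add power_mult_distrib Kpow_qj)

lemma frob_inj: "inj (\<lambda>x::'a. x ^ (q ^ s))"
proof (rule injI)
  fix x y :: 'a assume "x ^ (q ^ s) = y ^ (q ^ s)"
  then have "(x - y) ^ (q ^ s) = 0" using klin_diff[OF frob_lin, of x y] by simp
  then show "x = y" by simp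
qed

lemma subspace_neg: "k_subspace K U \<Longrightarrow> u \<in> U \<Longrightarrow> - u \<in> U"
  unfolding k_subspace_def using Kuminus[OF K1] by (metis mult_minus1)

lemma subspace_diff: "k_subspace K U \<Longrightarrow> u \<in> U \<Longrightarrow> x \<in> U \<Longrightarrow> u - x \<in> U"
  using subspace_neg[of U x] unfolding k_subspace_def by (metis diff_conv_add_uminus)

lemma subspace_poly_lin:
  assumes U: "k_subspace K U" and pw: "\<And>c. c \<in> K \<Longrightarrow> c ^ card U = c"
  shows "k_lin K (\<lambda>x::'a. \<Prod>u\<in>U. (x - u))"
proof -
  define N where "N = card U"
  have U0: "0 \<in> U" using U unfolding k_subspace_def by simp
  have Uadd: "u + x \<in> U" if "u \<in> U" "x \<in> U" for u x using U that unfolding k_subspace_def by simp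
  have N1: "N \<ge> 1" using U0 unfolding N_def by (metis card_0_eq empty_iff finite less_one not_less)
  have add: "(\<Prod>u\<in>U. (x + y - u)) = (\<Prod>u\<in>U. (x - u)) + (\<Prod>u\<in>U. (y - u))" for x y
  proof -
    define Py where "Py = (\<Prod>u\<in>U. [:y - u, 1:])"
    define P0 where "P0 = (\<Prod>u\<in>U. [:- u, 1:])"
    define D where "D = Py - P0 - [:\<Prod>u\<in>U. (y - u):]"
    have pPy: "poly Py x = (\<Prod>u\<in>U. (y - u + x))" for x unfolding Py_def by (simp add: poly_prod)
    have pP0: "poly P0 x = (\<Prod>u\<in>U. (x - u))" for x unfolding P0_def by (simp add: poly_prod)
    have "D = 0"
    proof (rule zero_poly_many_roots[of U])
      show "finite U" by simp
      show "poly D x = 0" if x: "x \<in> U" for x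
      proof -
        have "(\<Prod>u\<in>U. (y - u + x)) = (\<Prod>u\<in>U. (y - u))"
          by (rule prod.reindex_bij_witness[of _ "\<lambda>u. u + x" "\<lambda>u. u - x"])
             (use x Uadd subspace_diff[OF U] in \<open>auto simp: algebra_simps\<close>)
        moreover have "(\<Prod>u\<in>U. (x - u)) = 0" using x by (intro prod_zero) auto
        ultimately show ?thesis unfolding D_def by (simp add: pPy pP0)
      qed
      have dPy: "degree Py = N" "coeff Py N = 1" unfolding Py_def N_def
        using linprod_deg[of "\<lambda>u. y - u" U] linprod_lead[of "\<lambda>u. y - u" U] by auto
      have dP0: "degree P0 = N" "coeff P0 N = 1" unfolding P0_def N_def
        using linprod_deg[of "\<lambda>u. - u" U] linprod_lead[of "\<lambda>u. - u" U] by auto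
      have dD: "degree D \<le> N" unfolding D_def using dPy dP0
        by (intro degree_diff_le) auto
      have cD: "coeff D N = 0" unfolding D_def using dPy dP0 N1 by (cases N) simp_all
      show "degree D < card U"
      proof (rule ccontr)
        assume "\<not> degree D < card U"
        then have "degree D = N" using dD N_def by simp
        then have "D = 0" using cD by (metis leading_coeff_0_iff)
        then show False using \<open>degree D = N\<close> N1 by simp
      qed
    qed
    then have "poly D x = 0" by simp
    then show ?thesis unfolding D_def using pPy pP0 by (simp add: algebra_simps)
  qed
  have hom: "(\<Prod>u\<in>U. (c * x - u)) = c * (\<Prod>u\<in>U. (x - u))" if c: "c \<in> K" for c x
  proof (cases "c = 0")
    case True
    have "(\<Prod>u\<in>U. (0 - u)) = 0" using U0 by (intro prod_zero) auto
    then show ?thesis using True by simp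
  next
    case False
    have e1: "(\<Prod>u\<in>U. (c * x - u)) = (\<Prod>u\<in>U. c * (x - u / c))"
      using False by (intro prod.cong) (auto simp: field_simps)
    have e2: "(\<Prod>u\<in>U. c * (x - u / c)) = c ^ N * (\<Prod>u\<in>U. (x - u / c))" unfolding N_def by (simp add: prod.distrib)
    have m1: "c * u \<in> U" if "u \<in> U" for u using U c that unfolding k_subspace_def by blast
    have m2: "u / c \<in> U" if "u \<in> U" for u
    proof -
      have "inverse c * u \<in> U" using U Kinv[OF c] that unfolding k_subspace_def by blast
      then show ?thesis by (simp add: divide_inverse mult.commute)
    qed
    have e3: "(\<Prod>u\<in>U. (x - u / c)) = (\<Prod>u\<in>U. (x - u))"
      by (rule prod.reindex_bij_witness[of _ "\<lambda>u. c * u" "\<lambda>u. u / c"])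
         (use False m1 m2 in auto)
    have e4: "c ^ N = c" using pw[OF c] N_def by simp
    show ?thesis using e1 e2 e3 e4 by simp
  qed
  show ?thesis unfolding k_lin_def using add hom by auto
qed

end


context fsetup begin

lemma lf_lin: "k_linear_functional K \<mu> \<Longrightarrow> k_lin K \<mu>"
  unfolding k_linear_functional_def k_lin_def by simp

lemma basis_card:
  assumes "k_indep K B" "k_span K B = UNIV"
  shows "card B = t"
proof -
  have "q ^ card B = q ^ t" using card_span_indep[OF assms(1)] assms(2) F_card by simp
  then show ?thesis using q_ge2 by (simp add: power_inject_exp)
qed

lemma functional_rep:
  assumes Bi: "k_indep K B" and Bs: "k_span K B = UNIV" and mu: "k_linear_functional K \<mu>"
  shows "\<exists>m. \<forall>y. \<mu> y = tr q t (m * y)"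
proof -
  have finB: "finite B" using Bi unfolding k_indep_def by simp
  define LF where "LF = {\<mu>::'a\<Rightarrow>'a. k_linear_functional K \<mu>}"
  have det: "\<mu>1 = \<mu>2" if "\<mu>1 \<in> LF" "\<mu>2 \<in> LF" "\<forall>v\<in>B. \<mu>1 v = \<mu>2 v" for \<mu>1 \<mu>2
  proof
    fix y :: 'a
    have "y \<in> k_span K B" using Bs by simp
    then obtain c where c: "\<forall>v\<in>B. c v \<in> K" "y = (\<Sum>v\<in>B. c v * v)" unfolding k_span_def by blast
    have "\<mu>1 y = (\<Sum>v\<in>B. c v * \<mu>1 v)"
      using klin_sum[OF lf_lin, of \<mu>1 B c id] that(1) c unfolding LF_def by simp
    also have "\<dots> = (\<Sum>v\<in>B. c v * \<mu>2 v)" using that(3) by simp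
    also have "\<dots> = \<mu>2 y"
      using klin_sum[OF lf_lin, of \<mu>2 B c id] that(2) c unfolding LF_def by simp
    finally show "\<mu>1 y = \<mu>2 y" .
  qed
  have inj1: "inj_on (\<lambda>\<mu>. restrict \<mu> B) LF"
  proof (rule inj_onI)
    fix \<mu>1 \<mu>2 assume h: "\<mu>1 \<in> LF" "\<mu>2 \<in> LF" "restrict \<mu>1 B = restrict \<mu>2 B"
    have "\<forall>v\<in>B. \<mu>1 v = \<mu>2 v"
    proof
      fix v assume "v \<in> B"
      then show "\<mu>1 v = \<mu>2 v" using fun_cong[OF h(3), of v] by simp
    qed
    then show "\<mu>1 = \<mu>2" using det h by blast
  qed
  have img1: "(\<lambda>\<mu>. restrict \<mu> B) ` LF \<subseteq> PiE B (\<lambda>_. K)"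
    unfolding LF_def k_linear_functional_def by auto
  have finP: "finite (PiE B (\<lambda>_. K))" using finB by (intro finite_PiE) auto
  have finLF: "finite LF"
    using finite_imageD[OF finite_subset[OF img1 finP] inj1] .
  have cLF: "card LF \<le> q ^ t"
  proof -
    have "card LF = card ((\<lambda>\<mu>. restrict \<mu> B) ` LF)" using card_image[OF inj1] by simp
    also have "\<dots> \<le> card (PiE B (\<lambda>_. K))" by (intro card_mono finP img1)
    also have "\<dots> = q ^ card B" using finB by (simp add: card_PiE K_card)
    also have "\<dots> = q ^ t" using basis_card[OF Bi Bs] by simp
    finally show ?thesis .
  qed
  define \<Psi> where "\<Psi> m = (\<lambda>y. tr q t (m * y))" for m :: 'a
  have PsiLF: "\<Psi> m \<in> LF" for m
    unfolding LF_def \<Psi>_def k_linear_functional_def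
    by (simp add: distrib_left tr_add tr_smult mult.left_commute)
  have injPsi: "inj \<Psi>"
  proof (rule injI)
    fix m1 m2 assume "\<Psi> m1 = \<Psi> m2"
    then have "tr q t (y * (m1 - m2)) = 0" for y
      using fun_cong[of "\<Psi> m1" "\<Psi> m2" y] unfolding \<Psi>_def
      by (simp add: right_diff_distrib tr_diff mult.commute)
    then have "m1 - m2 = 0" by (rule tr_nondeg)
    then show "m1 = m2" by simp
  qed
  have "card (range \<Psi>) = q ^ t" using card_image[OF injPsi] F_card by simp
  moreover have "range \<Psi> \<subseteq> LF" using PsiLF by auto
  ultimately have "range \<Psi> = LF" using cLF finLF by (metis card_seteq)
  moreover have "\<mu> \<in> LF" using mu unfolding LF_def by simp
  ultimately obtain m where "\<mu> = \<Psi> m" by auto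
  then show ?thesis unfolding \<Psi>_def by auto
qed

lemma tr_span_zero:
  assumes sp: "k_span K (u ` {1..t}) = UNIV" and z: "\<And>i. i \<in> {1..t} \<Longrightarrow> tr q t (u i * d) = 0"
  shows "d = (0::'a)"
proof (rule tr_nondeg)
  fix y :: 'a
  have "y \<in> k_span K (u ` {1..t})" using sp by simp
  then obtain c where c: "\<forall>v\<in>u ` {1..t}. c v \<in> K" "y = (\<Sum>v\<in>u ` {1..t}. c v * v)"
    unfolding k_span_def by blast
  have "tr q t (y * d) = tr q t (\<Sum>v\<in>u ` {1..t}. c v * (v * d))"
    using c(2) by (simp add: sum_distrib_right mult.assoc)
  also have "\<dots> = (\<Sum>v\<in>u ` {1..t}. c v * tr q t (v * d))"
    using c(1) by (intro tr_Klin) auto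
  also have "\<dots> = 0" using z by (intro sum.neutral) auto
  finally show "tr q t (y * d) = 0" .
qed

lemma dual_basis:
  assumes sp: "k_span K (u ` {1..t}) = UNIV"
  shows "\<exists>\<nu>. \<forall>z. z = (\<Sum>i\<in>{1..t}. tr q t (u i * z) * \<nu> i)"
proof -
  define \<Phi> where "\<Phi> z = restrict (\<lambda>i. tr q t (u i * z)) {1..t}" for z :: 'a
  have injPhi: "inj \<Phi>"
  proof (rule injI)
    fix z1 z2 assume e: "\<Phi> z1 = \<Phi> z2"
    have "z1 - z2 = 0"
    proof (rule tr_span_zero[OF sp])
      fix i assume i: "i \<in> {1..t}"
      have "tr q t (u i * z1) = tr q t (u i * z2)" using fun_cong[OF e, of i] i unfolding \<Phi>_def by simp
      then show "tr q t (u i * (z1 - z2)) = 0" by (simp add: right_diff_distrib tr_diff)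
    qed
    then show "z1 = z2" by simp
  qed
  have sub: "range \<Phi> \<subseteq> PiE {1..t} (\<lambda>_. K)" unfolding \<Phi>_def by auto
  have "card (range \<Phi>) = q ^ t" using card_image[OF injPhi] F_card by simp
  moreover have "card (PiE {1..t} (\<lambda>_. K)) = q ^ t" by (simp add: card_PiE K_card)
  moreover have "finite (PiE {1..t} (\<lambda>_. K))" by (intro finite_PiE) auto
  ultimately have rng: "range \<Phi> = PiE {1..t} (\<lambda>_. K)" using sub by (metis card_subset_eq)
  define \<delta> where "\<delta> i = restrict (\<lambda>j. if j = i then (1::'a) else 0) {1..t}" for i :: nat
  have "\<delta> i \<in> range \<Phi>" for i unfolding rng \<delta>_def by auto
  then have Pd: "\<Phi> (inv \<Phi> (\<delta> i)) = \<delta> i" for i by (simp add: f_inv_into_f)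
  define \<nu> where "\<nu> i = inv \<Phi> (\<delta> i)" for i
  have tnu: "tr q t (u j * \<nu> i) = (if j = i then 1 else 0)" if "j \<in> {1..t}" for i j
    using fun_cong[OF Pd[of i], of j] that unfolding \<nu>_def \<Phi>_def \<delta>_def by simp
  have "z = (\<Sum>i\<in>{1..t}. tr q t (u i * z) * \<nu> i)" for z
  proof -
    have "\<Phi> (\<Sum>i\<in>{1..t}. tr q t (u i * z) * \<nu> i) = \<Phi> z"
    proof
      fix j
      show "\<Phi> (\<Sum>i\<in>{1..t}. tr q t (u i * z) * \<nu> i) j = \<Phi> z j"
      proof (cases "j \<in> {1..t}")
        case True
        have "tr q t (u j * (\<Sum>i\<in>{1..t}. tr q t (u i * z) * \<nu> i))
            = tr q t (\<Sum>i\<in>{1..t}. tr q t (u i * z) * (u j * \<nu> i))"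
          by (simp add: sum_distrib_left mult.left_commute)
        also have "\<dots> = (\<Sum>i\<in>{1..t}. tr q t (u i * z) * tr q t (u j * \<nu> i))"
          by (intro tr_Klin) simp
        also have "\<dots> = (\<Sum>i\<in>{1..t}. if i = j then tr q t (u i * z) else 0)"
          using True tnu by (intro sum.cong) auto
        also have "\<dots> = tr q t (u j * z)" using True by simp
        finally show ?thesis unfolding \<Phi>_def using True by simp
      qed (auto simp: \<Phi>_def)
    qed
    then show ?thesis using injPhi by (simp add: inj_eq)
  qed
  then show ?thesis by blast
qed

end


locale csetup = fsetup K q t for K :: "'a::{field,finite} set" and q t +
  fixes W :: "'a set" and s :: nat and astar :: 'a and \<beta> :: "nat \<Rightarrow> 'a"
  assumes W_sub: "k_subspace K W" and W_card: "card W = q ^ s"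
    and \<beta>_inj: "inj_on \<beta> {1..t}" and \<beta>_basis: "k_basis K (\<beta> ` {1..t})"
begin

abbreviation "g \<equiv> check_poly W astar \<beta>"
definition "Cc = (\<Prod>w\<in>W - {0}. inverse w)"
abbreviation "B \<equiv> \<beta> ` {1..t}"

lemma W0: "0 \<in> W" using W_sub unfolding k_subspace_def by simp

lemma cardW': "card (W - {0}) = q ^ s - 1" using W0 W_card by simp

lemma Cc_nz: "Cc \<noteq> 0" unfolding Cc_def by (simp add: prod_zero_iff)

lemma B_indep: "k_indep K B" and B_span: "k_span K B = UNIV" and B_fin: "finite B"
  using \<beta>_basis unfolding k_basis_def by auto

lemma deg_g: "degree (g i) \<le> q ^ s - 1"
proof -
  have "degree (g i) \<le> degree (\<Prod>w\<in>W - {0}. [:- (astar - inverse w * \<beta> i), 1:])"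
    unfolding check_poly_def by (rule degree_smult_le)
  also have "\<dots> = q ^ s - 1" using linprod_deg cardW' by metis
  finally show ?thesis .
qed

lemma poly_g: "poly (g i) \<alpha> = Cc * \<beta> i * (\<Prod>w\<in>W - {0}. (\<beta> i + (\<alpha> - astar) * w))"
proof -
  have "poly (g i) \<alpha> = \<beta> i * (\<Prod>w\<in>W - {0}. (\<alpha> - (astar - inverse w * \<beta> i)))"
  proof -
    have e: "poly [:- (astar - inverse w * \<beta> i), 1:] \<alpha> = \<alpha> - (astar - inverse w * \<beta> i)" for w
      by simp
    show ?thesis unfolding check_poly_def poly_smult poly_prod e ..
  qed
  also have "(\<Prod>w\<in>W - {0}. (\<alpha> - (astar - inverse w * \<beta> i)))
      = (\<Prod>w\<in>W - {0}. inverse w * (\<beta> i + (\<alpha> - astar) * w))"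
    by (intro prod.cong refl) (auto simp: field_simps)
  also have "\<dots> = Cc * (\<Prod>w\<in>W - {0}. (\<beta> i + (\<alpha> - astar) * w))"
    unfolding Cc_def by (simp add: prod.distrib)
  finally show ?thesis by (simp add: mult.assoc mult.left_commute)
qed

lemma poly_g_star: "poly (g i) astar = Cc * \<beta> i ^ (q ^ s)"
proof -
  have "poly (g i) astar = Cc * (\<beta> i * \<beta> i ^ (q ^ s - 1))"
    using poly_g[of i astar] cardW' by (simp add: mult.assoc)
  also have "\<beta> i * \<beta> i ^ (q ^ s - 1) = \<beta> i ^ (q ^ s)"
    using q_pos by (metis One_nat_def Suc_pred power_Suc zero_less_power)
  finally show ?thesis .
qed

definition "Ud d = (\<lambda>w. d * w) ` W"

lemma Ud_sub: "k_subspace K (Ud d)"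
  using W_sub unfolding k_subspace_def Ud_def
  by (auto simp: distrib_left[symmetric] mult.left_commute intro!: imageI)

lemma Ud_card: "d \<noteq> 0 \<Longrightarrow> card (Ud d) = q ^ s"
  unfolding Ud_def using W_card by (subst card_image) (auto simp: inj_on_def)

lemma Ud_poly: "d \<noteq> 0 \<Longrightarrow> x * (\<Prod>w\<in>W - {0}. (x + d * w)) = (\<Prod>u\<in>Ud d. (x - u))"
proof -
  assume d: "d \<noteq> 0"
  have "(\<Prod>u\<in>Ud d. (x - u)) = (\<Prod>w\<in>W. (x - d * w))"
    unfolding Ud_def by (subst prod.reindex) (auto simp: inj_on_def d)
  also have "\<dots> = (x - d * 0) * (\<Prod>w\<in>W - {0}. (x - d * w))"
    using W0 by (simp add: prod.remove)
  also have "(\<Prod>w\<in>W - {0}. (x - d * w)) = (\<Prod>w\<in>W - {0}. (x + d * w))"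
    by (rule prod.reindex_bij_witness[of _ "\<lambda>w. - w" "\<lambda>w. - w"])
       (auto simp: subspace_neg[OF W_sub])
  finally show ?thesis by simp
qed

lemma rank_star: "k_rank K ((\<lambda>i. poly (g i) astar) ` {1..t}) = t"
proof -
  define L where "L x = Cc * x ^ (q ^ s)" for x :: 'a
  have L: "k_lin K L" unfolding L_def by (rule klin_scale[OF frob_lin])
  have injL: "inj L" using frob_inj Cc_nz unfolding L_def inj_def by simp
  have surjL: "range L = UNIV" using injL by (simp add: finite_UNIV_inj_surj)
  have S: "(\<lambda>i. poly (g i) astar) ` {1..t} = L ` B"
    unfolding L_def poly_g_star image_image ..
  have "card (k_span K (L ` B)) = q ^ t" using span_image[OF L B_fin B_span] surjL F_card by simp
  then have "q ^ k_rank K (L ` B) = q ^ t" using card_span[of "L ` B"] B_fin by simp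
  then show ?thesis using S q_ge2 by (simp add: power_inject_exp)
qed

lemma span_star: "k_span K ((\<lambda>i. poly (g i) astar) ` {1..t}) = UNIV"
proof -
  define L where "L x = Cc * x ^ (q ^ s)" for x :: 'a
  have L: "k_lin K L" unfolding L_def by (rule klin_scale[OF frob_lin])
  have injL: "inj L" using frob_inj Cc_nz unfolding L_def inj_def by simp
  have surjL: "range L = UNIV" using injL by (simp add: finite_UNIV_inj_surj)
  have S: "(\<lambda>i. poly (g i) astar) ` {1..t} = L ` B"
    unfolding L_def poly_g_star image_image ..
  show ?thesis using span_image[OF L B_fin B_span] surjL S by simp
qed

lemma rank_other:
  assumes "\<alpha> \<noteq> astar"
  shows "k_rank K ((\<lambda>i. poly (g i) \<alpha>) ` {1..t}) + s \<le> t"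
proof -
  define d where "d = \<alpha> - astar"
  have d: "d \<noteq> 0" using assms d_def by simp
  define P where "P x = (\<Prod>u\<in>Ud d. (x - u))" for x :: 'a
  define L where "L x = Cc * P x" for x
  have P: "k_lin K P" unfolding P_def
    by (rule subspace_poly_lin[OF Ud_sub]) (simp add: Ud_card[OF d] Kpow_qj)
  have L: "k_lin K L" unfolding L_def by (rule klin_scale[OF P])
  have S: "(\<lambda>i. poly (g i) \<alpha>) ` {1..t} = L ` B"
    unfolding image_image L_def P_def
    by (intro image_cong refl) (simp add: poly_g d_def[symmetric] Ud_poly[OF d] mult.assoc)
  have ker: "L u = 0" if "u \<in> Ud d" for u
    unfolding L_def P_def using that by (simp add: prod_zero_iff)
  have "card (range L) * card (Ud d) \<le> card (UNIV::'a set)" by (rule card_range_ker[OF L ker])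
  moreover have "card (range L) = q ^ k_rank K (L ` B)"
    using span_image[OF L B_fin B_span] card_span[of "L ` B"] B_fin by simp
  ultimately have "q ^ (k_rank K (L ` B) + s) \<le> q ^ t" using Ud_card[OF d] F_card
    by (simp add: power_add)
  then show ?thesis using S q_ge2 by (simp add: power_le_imp_le_exp)
qed

end


context fsetup begin

lemma span_enum:
  assumes fin: "finite S"
  shows "\<exists>e c. \<forall>v\<in>S. (\<forall>j. c v j \<in> K) \<and> v = (\<Sum>j<k_rank K S. c v j * e j)"
proof -
  obtain T where T: "T \<subseteq> S" "k_indep K T" "card T = k_rank K S" "k_span K T = k_span K S"
    using max_indep[OF fin] by blast
  have finT: "finite T" using T(1) fin finite_subset by blast
  obtain h where h: "bij_betw h {0..<card T} T" using ex_bij_betw_nat_finite[OF finT] by blast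
  have "\<forall>v\<in>S. \<exists>cv. (\<forall>j. cv j \<in> K) \<and> v = (\<Sum>j<k_rank K S. cv j * h j)"
  proof
    fix v assume v: "v \<in> S"
    then have "v \<in> k_span K T" using T(4) span_superset[OF fin] by auto
    then obtain c where c: "\<forall>w\<in>T. c w \<in> K" "v = (\<Sum>w\<in>T. c w * w)" unfolding k_span_def by blast
    have "v = (\<Sum>j\<in>{0..<card T}. c (h j) * h j)"
      using c(2) sum.reindex_bij_betw[OF h, of "\<lambda>w. c w * w"] by simp
    also have "\<dots> = (\<Sum>j<k_rank K S. (if j < card T then c (h j) else 0) * h j)"
      using T(3) by (intro sum.cong) auto
    finally have "v = (\<Sum>j<k_rank K S. (if j < card T then c (h j) else 0) * h j)" .
    moreover have "\<forall>j. (if j < card T then c (h j) else 0) \<in> K"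
      using c(1) h unfolding bij_betw_def by auto
    ultimately show "\<exists>cv. (\<forall>j. cv j \<in> K) \<and> v = (\<Sum>j<k_rank K S. cv j * h j)" by (intro exI[of _ "\<lambda>j. if j < card T then c (h j) else 0"]) simp
  qed
  from bchoice[OF this] obtain c where "\<forall>v\<in>S. (\<forall>j. c v j \<in> K) \<and> v = (\<Sum>j<k_rank K S. c v j * h j)"
    by blast
  then show ?thesis by blast
qed

lemma tr_uminus: "tr q t (- x :: 'a) = - tr q t x"
  using tr_diff[of 0 x] by simp

end

locale rsetup = csetup K q t W s astar \<beta> for K :: "'a::{field,finite} set" and q t W s astar \<beta> +
  fixes A :: "'a set" and k n :: nat
  assumes A_card: "card A = n" and astar_in: "astar \<in> A" and r_ge: "n - k \<ge> q ^ s"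
begin

definition "lam \<alpha> = inverse (\<Prod>\<beta>\<in>A - {\<alpha>}. (\<alpha> - \<beta>))"

lemma lam_nz: "\<alpha> \<in> A \<Longrightarrow> lam \<alpha> \<noteq> 0"
  unfolding lam_def by (simp add: prod_zero_iff)

lemma deg_g_nk: "degree (g i) \<le> n - k - 1"
  using deg_g[of i] r_ge by simp

lemma check_eq:
  assumes f: "rs_msg k f"
  shows "(\<Sum>\<alpha>\<in>A. lam \<alpha> * poly (g i) \<alpha> * poly f \<alpha>) = 0"
proof -
  define h where "h = g i * f"
  have "h = 0 \<or> degree h + 2 \<le> card A"
  proof (cases "f = 0")
    case True then show ?thesis unfolding h_def by simp
  next
    case False
    then have df: "degree f < k" using f unfolding rs_msg_def by simp
    have "degree h \<le> degree (g i) + degree f" unfolding h_def by (rule degree_mult_le)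
    moreover have "q ^ s \<ge> 1" using q_pos by simp
    ultimately have "degree h + 2 \<le> n" using deg_g_nk[of i] df r_ge by linarith
    then show ?thesis using A_card by simp
  qed
  from lagrange_sum[OF _ this] have "(\<Sum>\<alpha>\<in>A. poly h \<alpha> * lam \<alpha>) = 0"
    unfolding lam_def by simp
  then show ?thesis unfolding h_def by (simp add: mult_ac)
qed

lemma repair: "linear_repair_scheme K A k astar (check_b K g t)"
proof -
  define b where "b = check_b K g t"
  define S where "S \<alpha> = (\<lambda>i. poly (g i) \<alpha>) ` {1..t}" for \<alpha>
  have bS: "b \<alpha> = k_rank K (S \<alpha>)" for \<alpha> unfolding b_def check_b_def S_def ..
  have "\<forall>\<alpha>. \<exists>e c. \<forall>v\<in>S \<alpha>. (\<forall>j. c v j \<in> K) \<and> v = (\<Sum>j<b \<alpha>. c v j * e j)"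
  proof
    fix \<alpha>
    have "finite (S \<alpha>)" unfolding S_def by simp
    from span_enum[OF this] show "\<exists>e c. \<forall>v\<in>S \<alpha>. (\<forall>j. c v j \<in> K) \<and> v = (\<Sum>j<b \<alpha>. c v j * e j)"
      unfolding bS .
  qed
  from choice[OF this] obtain E where "\<forall>\<alpha>. \<exists>c. \<forall>v\<in>S \<alpha>. (\<forall>j. c v j \<in> K) \<and> v = (\<Sum>j<b \<alpha>. c v j * E \<alpha> j)"
    by blast
  from choice[OF this] obtain C where "\<forall>\<alpha>. \<forall>v\<in>S \<alpha>. (\<forall>j. C \<alpha> v j \<in> K) \<and> v = (\<Sum>j<b \<alpha>. C \<alpha> v j * E \<alpha> j)"
    by blast
  then have EC: "\<And>\<alpha> v. v \<in> S \<alpha> \<Longrightarrow> (\<forall>j. C \<alpha> v j \<in> K) \<and> v = (\<Sum>j<b \<alpha>. C \<alpha> v j * E \<alpha> j)"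
    by blast
  define u where "u i = lam astar * poly (g i) astar" for i
  have usp: "k_span K (u ` {1..t}) = UNIV"
  proof -
    define L where "L x = (lam astar * Cc) * x ^ (q ^ s)" for x :: 'a
    have L: "k_lin K L" unfolding L_def by (rule klin_scale[OF frob_lin])
    have injL: "inj L" using frob_inj Cc_nz lam_nz[OF astar_in] unfolding L_def inj_def by simp
    have surjL: "range L = UNIV" using injL by (simp add: finite_UNIV_inj_surj)
    have "u ` {1..t} = L ` B" unfolding u_def L_def poly_g_star image_image by (simp add: mult.assoc)
    then show ?thesis using span_image[OF L B_fin B_span] surjL by simp
  qed
  obtain \<nu> where \<nu>: "\<And>z. z = (\<Sum>i\<in>{1..t}. tr q t (u i * z) * \<nu> i)" using dual_basis[OF usp] by blast
  define \<mu> where "\<mu> \<alpha> j y = tr q t (lam \<alpha> * E \<alpha> j * y)" for \<alpha> j y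
  define Y where "Y i x = - (\<Sum>\<alpha>\<in>A - {astar}. \<Sum>j<b \<alpha>. C \<alpha> (poly (g i) \<alpha>) j * x \<alpha> j)"
    for i and x :: "'a \<Rightarrow> nat \<Rightarrow> 'a"
  define R where "R x = (\<Sum>i\<in>{1..t}. Y i x * \<nu> i)" for x
  have lf: "k_linear_functional K (\<mu> \<alpha> j)" for \<alpha> j
    unfolding k_linear_functional_def \<mu>_def
    by (simp add: distrib_left tr_add tr_smult mult.left_commute)
  have Ylin: "Y i (\<lambda>\<alpha> j. c * x \<alpha> j + y \<alpha> j) = c * Y i x + Y i y" for i c x y
    unfolding Y_def by (simp add: distrib_left sum.distrib sum_distrib_left mult.left_commute)
  have Rlin: "R (\<lambda>\<alpha> j. c * x \<alpha> j + y \<alpha> j) = c * R x + R y" for c x y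
    unfolding R_def Ylin by (simp add: distrib_right sum.distrib sum_distrib_left mult.assoc)
  have rec: "R (download A astar b \<mu> f) = poly f astar" if f: "rs_msg k f" for f
  proof -
    have Yi: "Y i (download A astar b \<mu> f) = tr q t (u i * poly f astar)" if i: "i \<in> {1..t}" for i
    proof -
      have inner: "(\<Sum>j<b \<alpha>. C \<alpha> (poly (g i) \<alpha>) j * download A astar b \<mu> f \<alpha> j)
          = tr q t (lam \<alpha> * poly (g i) \<alpha> * poly f \<alpha>)" if a: "\<alpha> \<in> A - {astar}" for \<alpha>
      proof -
        have v: "poly (g i) \<alpha> \<in> S \<alpha>" unfolding S_def using i by simp
        have "(\<Sum>j<b \<alpha>. C \<alpha> (poly (g i) \<alpha>) j * download A astar b \<mu> f \<alpha> j)
            = (\<Sum>j<b \<alpha>. C \<alpha> (poly (g i) \<alpha>) j * tr q t (lam \<alpha> * E \<alpha> j * poly f \<alpha>))"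
          using a unfolding download_def \<mu>_def by (intro sum.cong) auto
        also have "\<dots> = tr q t (\<Sum>j<b \<alpha>. C \<alpha> (poly (g i) \<alpha>) j * (lam \<alpha> * E \<alpha> j * poly f \<alpha>))"
          using EC[OF v] by (intro tr_Klin[symmetric]) auto
        also have "(\<Sum>j<b \<alpha>. C \<alpha> (poly (g i) \<alpha>) j * (lam \<alpha> * E \<alpha> j * poly f \<alpha>))
            = lam \<alpha> * (\<Sum>j<b \<alpha>. C \<alpha> (poly (g i) \<alpha>) j * E \<alpha> j) * poly f \<alpha>"
          by (simp add: sum_distrib_left sum_distrib_right mult_ac)
        also have "(\<Sum>j<b \<alpha>. C \<alpha> (poly (g i) \<alpha>) j * E \<alpha> j) = poly (g i) \<alpha>"
          using EC[OF v] by simp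
        finally show ?thesis .
      qed
      have "Y i (download A astar b \<mu> f) = - (\<Sum>\<alpha>\<in>A - {astar}. tr q t (lam \<alpha> * poly (g i) \<alpha> * poly f \<alpha>))"
        unfolding Y_def using inner by simp
      also have "\<dots> = - tr q t (\<Sum>\<alpha>\<in>A - {astar}. lam \<alpha> * poly (g i) \<alpha> * poly f \<alpha>)"
        by (simp add: tr_sum)
      also have "(\<Sum>\<alpha>\<in>A - {astar}. lam \<alpha> * poly (g i) \<alpha> * poly f \<alpha>)
          = - (lam astar * poly (g i) astar * poly f astar)"
      proof -
        have "(\<Sum>\<alpha>\<in>A. lam \<alpha> * poly (g i) \<alpha> * poly f \<alpha>) = lam astar * poly (g i) astar * poly f astar
            + (\<Sum>\<alpha>\<in>A - {astar}. lam \<alpha> * poly (g i) \<alpha> * poly f \<alpha>)"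
          using astar_in by (simp add: sum.remove)
        then show ?thesis using check_eq[OF f, of i] by (simp add: eq_neg_iff_add_eq_0 add.commute)
      qed
      finally show ?thesis unfolding u_def by (simp add: tr_uminus mult.assoc)
    qed
    have "R (download A astar b \<mu> f) = (\<Sum>i\<in>{1..t}. tr q t (u i * poly f astar) * \<nu> i)"
      unfolding R_def using Yi by simp
    also have "\<dots> = poly f astar" using \<nu>[of "poly f astar"] by simp
    finally show ?thesis .
  qed
  show ?thesis unfolding linear_repair_scheme_def b_def[symmetric]
    using lf Rlin rec by blast
qed

end


lemma card_filter_sum: "finite A \<Longrightarrow> card {x\<in>A. P x} = (\<Sum>x\<in>A. if P x then 1 else (0::nat))"
  using sum.inter_filter[of A "\<lambda>_. (1::nat)" P] by simp

lemma tangent_pow: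
  assumes q: "(q::real) > 1"
  shows "q ^ s * (1 + (e - real s) * ln q) \<le> exp (e * ln q)"
proof -
  have "q ^ s = exp (real s * ln q)" using q by (simp add: ln_realpow[symmetric])
  moreover have "exp (e * ln q) = exp (real s * ln q) * exp ((e - real s) * ln q)"
    by (simp add: exp_add[symmetric] algebra_simps)
  moreover have "1 + (e - real s) * ln q \<le> exp ((e - real s) * ln q)" by (rule exp_ge_add_one_self)
  ultimately show ?thesis by simp
qed

context rsetup begin

lemma lower_bound:
  assumes nq: "n = q ^ t" and rq: "n - k = q ^ s" and sch: "linear_repair_scheme K A k astar b"
    and s_le: "s \<le> t"
  shows "(n - 1) * (t - s) \<le> bandwidth A astar b"
proof -
  obtain \<mu> R where lf: "\<And>\<alpha> j. k_linear_functional K (\<mu> \<alpha> j)"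
    and Rlin: "\<And>x y c. (\<forall>\<alpha> j. x \<alpha> j \<in> K) \<Longrightarrow> (\<forall>\<alpha> j. y \<alpha> j \<in> K) \<Longrightarrow> c \<in> K \<Longrightarrow>
              R (\<lambda>\<alpha> j. c * x \<alpha> j + y \<alpha> j) = c * R x + R y"
    and rec: "\<And>f. rs_msg k f \<Longrightarrow> R (download A astar b \<mu> f) = poly f astar"
    using sch unfolding linear_repair_scheme_def by blast
  define A' where "A' = A - {astar}"
  define I where "I = Sigma A' (\<lambda>\<alpha>. {..<b \<alpha>})"
  have finA': "finite A'" by simp
  have finI: "finite I" unfolding I_def by (intro finite_SigmaI) auto
  define \<delta> where "\<delta> (p::'a \<times> nat) = (\<lambda>(\<alpha>::'a) (j::nat). if (\<alpha>, j) = p then (1::'a) else 0)" for p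
  have R0h: "R (\<lambda>\<alpha> j. 0) = R (\<lambda>\<alpha> j. 0) + R (\<lambda>\<alpha> j. 0)"
    using Rlin[of "\<lambda>\<alpha> j. 0" "\<lambda>\<alpha> j. 0" 1] by simp
  have R0: "R (\<lambda>\<alpha> j. 0) = 0" using R0h by (metis add_cancel_right_right)
  have Rsum: "R (\<lambda>\<alpha> j. if (\<alpha>, j) \<in> J then x \<alpha> j else 0) = (\<Sum>p\<in>J. x (fst p) (snd p) * R (\<delta> p))"
    if "finite J" "\<forall>\<alpha> j. x \<alpha> j \<in> K" for J x
    using that(1)
  proof (induction J rule: finite_induct)
    case empty then show ?case using R0 by simp
  next
    case (insert p J)
    have eq: "(\<lambda>\<alpha> j. if (\<alpha>, j) \<in> insert p J then x \<alpha> j else 0)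
        = (\<lambda>\<alpha> j. x (fst p) (snd p) * \<delta> p \<alpha> j + (if (\<alpha>, j) \<in> J then x \<alpha> j else 0))"
      using insert(2) unfolding \<delta>_def by (auto simp: fun_eq_iff)
    have "R (\<lambda>\<alpha> j. x (fst p) (snd p) * \<delta> p \<alpha> j + (if (\<alpha>, j) \<in> J then x \<alpha> j else 0))
        = x (fst p) (snd p) * R (\<delta> p) + R (\<lambda>\<alpha> j. if (\<alpha>, j) \<in> J then x \<alpha> j else 0)"
      by (rule Rlin) (use that(2) in \<open>auto simp: \<delta>_def\<close>)
    then show ?case using eq insert by simp
  qed
  have "\<forall>p. \<exists>m. \<forall>y. \<mu> (fst p) (snd p) y = tr q t (m * y)"
    using functional_rep[OF B_indep B_span lf] by blast
  from choice[OF this] obtain M where M: "\<And>p y. \<mu> (fst p) (snd p) y = tr q t (M p * y)" by blast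
  define a where "a i p = tr q t (\<beta> i * R (\<delta> p))" for i p
  have aK: "a i p \<in> K" for i p unfolding a_def by simp
  define w where "w i \<alpha> = (\<Sum>j<b \<alpha>. a i (\<alpha>, j) * M (\<alpha>, j))" for i \<alpha>
  have key: "\<beta> i * poly f astar = (\<Sum>\<alpha>\<in>A'. w i \<alpha> * poly f \<alpha>)" if f: "rs_msg k f" for f i
  proof -
    define G where "G f = \<beta> i * poly f astar - (\<Sum>\<alpha>\<in>A'. w i \<alpha> * poly f \<alpha>)" for f
    have trG: "tr q t (G f) = 0" if f: "rs_msg k f" for f
    proof -
      define d where "d p = download A astar b \<mu> f (fst p) (snd p)" for p
      have dK: "\<forall>\<alpha> j. download A astar b \<mu> f \<alpha> j \<in> K"
        using lf unfolding download_def k_linear_functional_def by simp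
      have dl: "download A astar b \<mu> f = (\<lambda>\<alpha> j. if (\<alpha>, j) \<in> I then download A astar b \<mu> f \<alpha> j else 0)"
        unfolding I_def A'_def download_def by (auto simp: fun_eq_iff)
      have "tr q t (\<beta> i * poly f astar) = tr q t (\<beta> i * R (download A astar b \<mu> f))"
        using rec[OF f] by simp
      also have "\<dots> = tr q t (\<beta> i * (\<Sum>p\<in>I. d p * R (\<delta> p)))"
        using Rsum[OF finI dK] dl unfolding d_def by metis
      also have "\<dots> = tr q t (\<Sum>p\<in>I. d p * (\<beta> i * R (\<delta> p)))"
        by (simp add: sum_distrib_left mult.left_commute)
      also have "\<dots> = (\<Sum>p\<in>I. d p * a i p)"
        unfolding a_def using dK unfolding d_def by (intro tr_Klin) auto
      also have "\<dots> = (\<Sum>p\<in>I. a i p * tr q t (M p * poly f (fst p)))"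
      proof (intro sum.cong refl)
        fix p assume p: "p \<in> I"
        then have "d p = \<mu> (fst p) (snd p) (poly f (fst p))"
          unfolding d_def download_def I_def A'_def by auto
        then show "d p * a i p = a i p * tr q t (M p * poly f (fst p))" using M by simp
      qed
      also have "\<dots> = tr q t (\<Sum>p\<in>I. a i p * (M p * poly f (fst p)))"
        using aK by (intro tr_Klin[symmetric]) auto
      also have "(\<Sum>p\<in>I. a i p * (M p * poly f (fst p))) = (\<Sum>\<alpha>\<in>A'. w i \<alpha> * poly f \<alpha>)"
      proof -
        have "(\<Sum>\<alpha>\<in>A'. \<Sum>j<b \<alpha>. a i (\<alpha>, j) * (M (\<alpha>, j) * poly f \<alpha>))
            = (\<Sum>p\<in>I. a i p * (M p * poly f (fst p)))"
          unfolding I_def by (subst sum.Sigma) (auto simp: finA' split_def)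
        then show ?thesis unfolding w_def by (simp add: sum_distrib_right mult.assoc)
      qed
      finally show ?thesis unfolding G_def by (simp add: tr_diff)
    qed
    have Gs: "G (smult c f) = c * G f" for c
      unfolding G_def by (simp add: sum_distrib_left right_diff_distrib mult_ac)
    have ms: "rs_msg k (smult c f)" for c
      using f unfolding rs_msg_def by (auto intro: le_less_trans[OF degree_smult_le])
    have "G f = 0"
    proof (rule tr_nondeg)
      fix c show "tr q t (c * G f) = 0" using trG[OF ms[of c]] Gs by simp
    qed
    then show ?thesis unfolding G_def by simp
  qed
  define X where "X = PiE {1..t} (\<lambda>_. K)"
  define Wx where "Wx x \<alpha> = (\<Sum>i\<in>{1..t}. x i * w i \<alpha>)" for x \<alpha>
  have keyx: "(\<Sum>i\<in>{1..t}. x i * \<beta> i) * poly f astar = (\<Sum>\<alpha>\<in>A'. Wx x \<alpha> * poly f \<alpha>)"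
    if f: "rs_msg k f" for x f
  proof -
    have "(\<Sum>i\<in>{1..t}. x i * \<beta> i) * poly f astar = (\<Sum>i\<in>{1..t}. x i * (\<beta> i * poly f astar))"
      by (simp add: sum_distrib_right mult.assoc)
    also have "\<dots> = (\<Sum>i\<in>{1..t}. x i * (\<Sum>\<alpha>\<in>A'. w i \<alpha> * poly f \<alpha>))" using key[OF f] by simp
    also have "\<dots> = (\<Sum>\<alpha>\<in>A'. Wx x \<alpha> * poly f \<alpha>)"
      unfolding Wx_def by (simp add: sum_distrib_left sum_distrib_right mult.assoc) (rule sum.swap)
    finally show ?thesis .
  qed
  have indep: "\<forall>i\<in>{1..t}. x i = 0" if x: "x \<in> X" "(\<Sum>i\<in>{1..t}. x i * \<beta> i) = 0" for x
  proof -
    define c where "c v = x (the_inv_into {1..t} \<beta> v)" for v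
    have cb: "c (\<beta> i) = x i" if "i \<in> {1..t}" for i
      unfolding c_def using the_inv_into_f_f[OF \<beta>_inj that] by simp
    have "(\<Sum>v\<in>B. c v * v) = (\<Sum>i\<in>{1..t}. c (\<beta> i) * \<beta> i)"
      by (rule sum.reindex[OF \<beta>_inj, unfolded comp_def])
    also have "\<dots> = 0" using cb x(2) by simp
    finally have s0: "(\<Sum>v\<in>B. c v * v) = 0" .
    have "\<forall>v\<in>B. c v \<in> K" using x(1) cb unfolding X_def by auto
    then have "\<forall>v\<in>B. c v = 0" using B_indep s0 unfolding k_indep_def by blast
    then show ?thesis using cb by auto
  qed
  have zeros: "card {\<alpha>\<in>A'. Wx x \<alpha> = 0} \<le> q ^ s - 1" if x: "x \<in> X" "\<exists>i\<in>{1..t}. x i \<noteq> 0" for x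
  proof -
    define Sx where "Sx = {\<alpha>\<in>A'. Wx x \<alpha> \<noteq> 0}"
    have "card Sx \<ge> k"
    proof (rule ccontr)
      assume "\<not> card Sx \<ge> k"
      then have lt: "card Sx < k" by simp
      define f where "f = (\<Prod>\<gamma>\<in>Sx. [:- \<gamma>, 1:])"
      have fm: "rs_msg k f" unfolding rs_msg_def f_def using linprod_deg[of "\<lambda>\<gamma>. - \<gamma>" Sx] lt by simp
      have fa: "poly f astar \<noteq> 0" unfolding f_def Sx_def A'_def by (auto simp: poly_prod prod_zero_iff)
      have "(\<Sum>\<alpha>\<in>A'. Wx x \<alpha> * poly f \<alpha>) = 0"
      proof (intro sum.neutral ballI)
        fix \<alpha> assume "\<alpha> \<in> A'"
        show "Wx x \<alpha> * poly f \<alpha> = 0"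
        proof (cases "\<alpha> \<in> Sx")
          case True
          then have "poly f \<alpha> = 0" unfolding f_def by (auto simp: poly_prod prod_zero_iff Sx_def)
          then show ?thesis by simp
        next
          case False then show ?thesis using \<open>\<alpha> \<in> A'\<close> unfolding Sx_def by simp
        qed
      qed
      then have "(\<Sum>i\<in>{1..t}. x i * \<beta> i) = 0" using keyx[OF fm, of x] fa by simp
      then show False using indep[OF x(1)] x(2) by blast
    qed
    have "{\<alpha>\<in>A'. Wx x \<alpha> = 0} = A' - Sx" unfolding Sx_def by auto
    then have "card {\<alpha>\<in>A'. Wx x \<alpha> = 0} = card A' - card Sx"
      by (simp add: card_Diff_subset Sx_def)
    moreover have "card A' = n - 1" unfolding A'_def using A_card astar_in by simp
    ultimately show ?thesis using \<open>card Sx \<ge> k\<close> rq by simp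
  qed
  define Z where "Z \<alpha> = {x\<in>X. Wx x \<alpha> = 0}" for \<alpha>
  have Zbig: "q ^ t \<le> q ^ b \<alpha> * card (Z \<alpha>)" for \<alpha>
  proof -
    have kc: "q ^ card {1..t} \<le> q ^ card {..<b \<alpha>} *
        card {x \<in> PiE {1..t} (\<lambda>_. K). \<forall>j\<in>{..<b \<alpha>}. (\<Sum>i\<in>{1..t}. x i * a i (\<alpha>, j)) = 0}"
      by (rule ker_count) (auto simp: aK)
    have sub: "{x \<in> PiE {1..t} (\<lambda>_. K). \<forall>j\<in>{..<b \<alpha>}. (\<Sum>i\<in>{1..t}. x i * a i (\<alpha>, j)) = 0} \<subseteq> Z \<alpha>"
    proof
      fix x assume h: "x \<in> {x \<in> PiE {1..t} (\<lambda>_. K). \<forall>j\<in>{..<b \<alpha>}. (\<Sum>i\<in>{1..t}. x i * a i (\<alpha>, j)) = 0}"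
      have "Wx x \<alpha> = (\<Sum>j<b \<alpha>. (\<Sum>i\<in>{1..t}. x i * a i (\<alpha>, j)) * M (\<alpha>, j))"
        unfolding Wx_def w_def
        by (simp add: sum_distrib_left sum_distrib_right mult.assoc) (rule sum.swap)
      also have "\<dots> = 0" using h by simp
      finally show "x \<in> Z \<alpha>" using h unfolding Z_def X_def by simp
    qed
    have "card {x \<in> PiE {1..t} (\<lambda>_. K). \<forall>j\<in>{..<b \<alpha>}. (\<Sum>i\<in>{1..t}. x i * a i (\<alpha>, j)) = 0} \<le> card (Z \<alpha>)"
      by (intro card_mono sub) (simp add: Z_def X_def finite_PiE)
    then have "q ^ b \<alpha> * card {x \<in> PiE {1..t} (\<lambda>_. K). \<forall>j\<in>{..<b \<alpha>}. (\<Sum>i\<in>{1..t}. x i * a i (\<alpha>, j)) = 0}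
        \<le> q ^ b \<alpha> * card (Z \<alpha>)" by (rule mult_le_mono2)
    moreover have "q ^ card {1..t} = q ^ t" "q ^ card {..<b \<alpha>} = q ^ b \<alpha>" by simp_all
    ultimately show ?thesis using kc by (metis (no_types, lifting) le_trans)
  qed
  (* double counting *)
  define z0 where "z0 = restrict (\<lambda>_. (0::'a)) {1..t}"
  have z0X: "z0 \<in> X" unfolding z0_def X_def by auto
  have Wz0: "Wx z0 \<alpha> = 0" for \<alpha> unfolding Wx_def z0_def by simp
  have finX: "finite X" unfolding X_def by (intro finite_PiE) auto
  have cardX: "card X = q ^ t" unfolding X_def by (simp add: card_PiE K_card)
  define X0 where "X0 = X - {z0}"
  have nz: "\<exists>i\<in>{1..t}. x i \<noteq> 0" if "x \<in> X0" for x
  proof (rule ccontr)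
    assume "\<not> (\<exists>i\<in>{1..t}. x i \<noteq> 0)"
    then have "x = z0" using that z0X unfolding X0_def X_def z0_def by (intro PiE_ext) auto
    then show False using that unfolding X0_def by simp
  qed
  have cZ: "card (Z \<alpha>) = 1 + card {x\<in>X0. Wx x \<alpha> = 0}" for \<alpha>
  proof -
    have "Z \<alpha> = insert z0 {x\<in>X0. Wx x \<alpha> = 0}" unfolding Z_def X0_def using z0X Wz0 by auto
    moreover have "finite {x\<in>X0. Wx x \<alpha> = 0}" unfolding X0_def using finX by simp
    ultimately show ?thesis unfolding X0_def by simp
  qed
  have finX0: "finite X0" unfolding X0_def using finX by simp
  have cardX0: "card X0 = q ^ t - 1" unfolding X0_def using cardX z0X finX by simp
  have dc: "(\<Sum>\<alpha>\<in>A'. card {x\<in>X0. Wx x \<alpha> = 0}) \<le> (q ^ t - 1) * (q ^ s - 1)"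
  proof -
    have "(\<Sum>\<alpha>\<in>A'. card {x\<in>X0. Wx x \<alpha> = 0}) = (\<Sum>\<alpha>\<in>A'. \<Sum>x\<in>X0. if Wx x \<alpha> = 0 then 1 else 0)"
      using finX0 by (simp add: card_filter_sum)
    also have "\<dots> = (\<Sum>x\<in>X0. \<Sum>\<alpha>\<in>A'. if Wx x \<alpha> = 0 then 1 else 0)" by (rule sum.swap)
    also have "\<dots> = (\<Sum>x\<in>X0. card {\<alpha>\<in>A'. Wx x \<alpha> = 0})" using finA' by (simp add: card_filter_sum)
    also have "\<dots> \<le> (\<Sum>x\<in>X0. q ^ s - 1)"
      by (intro sum_mono zeros) (use nz in \<open>auto simp: X0_def\<close>)
    also have "\<dots> = (q ^ t - 1) * (q ^ s - 1)" using cardX0 by simp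
    finally show ?thesis .
  qed
  have cA': "card A' = q ^ t - 1" unfolding A'_def using A_card astar_in nq by simp
  have sumZ: "(\<Sum>\<alpha>\<in>A'. card (Z \<alpha>)) \<le> (q ^ t - 1) * q ^ s"
  proof -
    have "(\<Sum>\<alpha>\<in>A'. card (Z \<alpha>)) = card A' + (\<Sum>\<alpha>\<in>A'. card {x\<in>X0. Wx x \<alpha> = 0})"
      using cZ by (simp add: sum_Suc)
    also have "\<dots> \<le> (q ^ t - 1) + (q ^ t - 1) * (q ^ s - 1)" using dc cA' by simp
    also have "\<dots> = (q ^ t - 1) * q ^ s"
    proof -
      have "q ^ s \<noteq> 0" using q_pos by simp
      then obtain m' where m': "q ^ s = Suc m'" using not0_implies_Suc by blast
      show ?thesis by (simp add: m')
    qed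
    finally show ?thesis .
  qed
  (* convexity *)
  define Q where "Q = real q"
  have Q1: "Q > 1" unfolding Q_def using q_ge2 by simp
  have lnQ: "ln Q > 0" using Q1 by simp
  have Eb: "Q ^ s * (1 + (real t - real (b \<alpha>) - real s) * ln Q) \<le> real (card (Z \<alpha>))" for \<alpha>
  proof -
    have "Q ^ s * (1 + ((real t - real (b \<alpha>)) - real s) * ln Q) \<le> exp ((real t - real (b \<alpha>)) * ln Q)"
      by (rule tangent_pow[OF Q1])
    also have "exp ((real t - real (b \<alpha>)) * ln Q) = Q ^ t / Q ^ b \<alpha>"
      using Q1 by (simp add: left_diff_distrib exp_diff ln_realpow[symmetric])
    also have "\<dots> \<le> real (card (Z \<alpha>))"
    proof -
      have "real (q ^ t) \<le> real (q ^ b \<alpha> * card (Z \<alpha>))" using Zbig[of \<alpha>] by linarith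
      then have "Q ^ t \<le> Q ^ b \<alpha> * real (card (Z \<alpha>))" unfolding Q_def by simp
      moreover have "Q ^ b \<alpha> > 0" using Q1 by simp
      ultimately show ?thesis by (simp add: divide_le_eq mult.commute)
    qed
    finally show ?thesis .
  qed
  have "(\<Sum>\<alpha>\<in>A'. Q ^ s * (1 + (real t - real (b \<alpha>) - real s) * ln Q)) \<le> (\<Sum>\<alpha>\<in>A'. real (card (Z \<alpha>)))"
    by (intro sum_mono Eb)
  also have "\<dots> \<le> real ((q ^ t - 1) * q ^ s)" using sumZ by (simp only: of_nat_sum[symmetric] of_nat_le_iff)
  finally have ineq: "(\<Sum>\<alpha>\<in>A'. Q ^ s * (1 + (real t - real (b \<alpha>) - real s) * ln Q)) \<le> real (card A') * Q ^ s"
    using cA' unfolding Q_def by simp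
  have "(\<Sum>\<alpha>\<in>A'. Q ^ s * (1 + (real t - real (b \<alpha>) - real s) * ln Q))
      = real (card A') * Q ^ s + Q ^ s * ln Q * (\<Sum>\<alpha>\<in>A'. (real t - real s - real (b \<alpha>)))"
  proof -
    have "(\<Sum>\<alpha>\<in>A'. Q ^ s * (1 + (real t - real (b \<alpha>) - real s) * ln Q))
        = (\<Sum>\<alpha>\<in>A'. Q ^ s + Q ^ s * ln Q * (real t - real s - real (b \<alpha>)))"
      by (intro sum.cong refl) (simp add: algebra_simps)
    also have "\<dots> = real (card A') * Q ^ s + Q ^ s * ln Q * (\<Sum>\<alpha>\<in>A'. (real t - real s - real (b \<alpha>)))"
      by (simp add: sum.distrib sum_distrib_left)
    finally show ?thesis .
  qed
  with ineq have "Q ^ s * ln Q * (\<Sum>\<alpha>\<in>A'. (real t - real s - real (b \<alpha>))) \<le> 0" by simp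
  moreover have "Q ^ s * ln Q > 0" using Q1 lnQ by simp
  ultimately have "(\<Sum>\<alpha>\<in>A'. (real t - real s - real (b \<alpha>))) \<le> 0"
    by (metis mult_le_cancel_left_pos mult_zero_right)
  then have "real (card A') * (real t - real s) \<le> (\<Sum>\<alpha>\<in>A'. real (b \<alpha>))"
    by (simp add: sum_subtractf)
  moreover have "real (t - s) = real t - real s" using s_le by (simp add: of_nat_diff)
  ultimately have "real (card A' * (t - s)) \<le> real (\<Sum>\<alpha>\<in>A'. b \<alpha>)" by simp
  then have "card A' * (t - s) \<le> (\<Sum>\<alpha>\<in>A'. b \<alpha>)" by (simp only: of_nat_le_iff)
  moreover have "card A' = n - 1" using cA' nq by simp
  ultimately show ?thesis unfolding bandwidth_def A'_def by simp
qed

end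


theorem theorem3:
  fixes K :: "'a::{field,finite} set" and q t s n k :: nat
    and A W :: "'a set" and astar :: 'a and \<beta> :: "nat \<Rightarrow> 'a"
  assumes q_pp: "\<exists>p m. prime p \<and> m > 0 \<and> q = p ^ m"
    and t_pos: "t \<ge> 1"
    and K_sub: "is_subfield K" and K_card: "card K = q"
    and F_card: "card (UNIV :: 'a set) = q ^ t"
    and A_card: "card A = n"
    and r_ge: "n - k \<ge> q ^ s" and s_lt: "s < t"
    and W_sub: "k_subspace K W" and W_dim: "k_rank K W = s"
    and astar_in: "astar \<in> A"
    and \<beta>_inj: "inj_on \<beta> {1..t}" and \<beta>_basis: "k_basis K (\<beta> ` {1..t})"
  shows "(\<forall>i\<in>{1..t}. degree (check_poly W astar \<beta> i) \<le> n - k - 1)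
       \<and> k_rank K ((\<lambda>i. poly (check_poly W astar \<beta> i) astar) ` {1..t}) = t
       \<and> linear_repair_scheme K A k astar (check_b K (check_poly W astar \<beta>) t)
       \<and> bandwidth_bits q A astar (check_b K (check_poly W astar \<beta>) t)
           \<le> real ((n - 1) * (t - s)) * log 2 (real q)
       \<and> (n = q ^ t \<and> n - k = q ^ s \<longrightarrow>
           (\<forall>b. linear_repair_scheme K A k astar b \<longrightarrow>
              bandwidth_bits q A astar (check_b K (check_poly W astar \<beta>) t)
                \<le> bandwidth_bits q A astar b))"
proof -
  interpret fsetup K q t
    by unfold_locales (use q_pp t_pos K_sub K_card F_card in auto)
  have W_card: "card W = q ^ s"
    using subspace_span_eq[OF W_sub] card_span[of W] W_dim by simp
  interpret rsetup K q t W s astar \<beta> A k n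
    by unfold_locales (use W_sub W_card \<beta>_inj \<beta>_basis A_card astar_in r_ge in auto)
  define bb where "bb = check_b K (check_poly W astar \<beta>) t"
  have log_nn: "log 2 (real q) \<ge> 0" using q_ge2 by simp
  have bw: "bandwidth A astar bb \<le> (n - 1) * (t - s)"
  proof -
    have "bandwidth A astar bb = (\<Sum>\<alpha>\<in>A - {astar}. bb \<alpha>)" unfolding bandwidth_def ..
    also have "\<dots> \<le> (\<Sum>\<alpha>\<in>A - {astar}. t - s)"
    proof (intro sum_mono)
      fix \<alpha> assume "\<alpha> \<in> A - {astar}"
      then have "\<alpha> \<noteq> astar" by simp
      from rank_other[OF this] show "bb \<alpha> \<le> t - s" unfolding bb_def check_b_def by simp
    qed
    also have "\<dots> = (n - 1) * (t - s)" using A_card astar_in by simp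
    finally show ?thesis .
  qed
  have bw': "real (bandwidth A astar bb) \<le> real ((n - 1) * (t - s))" using bw by (simp only: of_nat_le_iff)
  have c4: "bandwidth_bits q A astar bb \<le> real ((n - 1) * (t - s)) * log 2 (real q)"
    unfolding bandwidth_bits_def using bw' log_nn by (rule mult_right_mono)
  have c5: "bandwidth_bits q A astar bb \<le> bandwidth_bits q A astar b"
    if "n = q ^ t" "n - k = q ^ s" "linear_repair_scheme K A k astar b" for b
  proof -
    have "bandwidth A astar bb \<le> bandwidth A astar b"
      using bw lower_bound[OF that] s_lt by simp
    then have "real (bandwidth A astar bb) \<le> real (bandwidth A astar b)" by (simp only: of_nat_le_iff)
    then show ?thesis unfolding bandwidth_bits_def using log_nn by (rule mult_right_mono)
  qed
  show ?thesis
    using deg_g_nk rank_star repair c4 c5 unfolding bb_def by blast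
qed


end
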